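(* Let $q$ be a prime power. Let $\mathcal{D}_1,\dots,\mathcal{D}_m$ be subsets of $R_{\mathrm{homog}}$, where each $\mathcal{D}_j$ is one of $\mathcal{T}_{L_j,P_j}$ (with $P_j$ a closed point of $\mathbb{P}^2$ and $L_j$ an $\mathbb{F}_q$-line through $P_j$), $\mathcal{S}_{Q_j}$, $\mathcal{A}_0(Q_j)$, $\mathcal{A}_{L_j}(Q_j)$ (with $Q_j\in\mathbb{P}^2(\mathbb{F}_q)$ and $L_j$ an $\mathbb{F}_q$-line through $Q_j$), or the complement in $R_{\mathrm{homog}}$ of one of these. If the points $P_j$ and $Q_j$ appearing are all distinct, then for all sufficiently large $d$, \[ \mu_d\Big(\bigcap_{j=1}^m\mathcal{D}_j\Big)=\prod_{j=1}^m\mu_d(\mathcal{D}_j). \]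
   Context: Let $R=\mathbb{F}_q[x,y,z]$, $R_d$ the homogeneous polynomials of degree $d$ (including $0$), $R_{\mathrm{homog}}=\bigcup_{d\ge1}R_d$, $\mu_d(\mathcal{A})=\#(\mathcal{A}\cap R_d)/\#R_d$. For an $\mathbb{F}_q$-point $Q$, $\mathcal{S}_Q$ is the set of $f\in R_{\mathrm{homog}}$ with $\{f=0\}$ singular at $Q$. For an $\mathbb{F}_q$-line $L$ and a closed point $P\in L$, $\mathcal{T}_{L,P}$ is the set of $f\in R_{\mathrm{homog}}$ whose restriction to $L$ vanishes to order at least $2$ at $P$ ("tangent to $L$ at $P$", including the singular case). For an $\mathbb{F}_q$-point $Q$, $\mathcal{A}_0(Q)=R_{\mathrm{homog}}\setminus\bigcup_{L}\mathcal{T}_{L,Q}$, the union over all $q+1$ $\mathbb{F}_q$-lines $L$ through $Q$, and for an $\mathbb{F}_q$-line $L\ni Q$, $\mathcal{A}_L(Q)=\mathcal{T}_{L,Q}\setminus\mathcal{S}_Q$. *)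

theory Defs
  imports "HOL-Computational_Algebra.Polynomial"
begin

text \<open>Homogeneous polynomials in x,y,z over a finite field are represented by their
coefficient functions on exponent triples (i,j,k) (monomial x^i y^j z^k).\<close>

type_synonym 'a poly3 = "nat \<times> nat \<times> nat \<Rightarrow> 'a"
type_synonym 'a triple = "'a \<times> 'a \<times> 'a"

definition supp3 :: "('a::zero) poly3 \<Rightarrow> (nat \<times> nat \<times> nat) set" where
  "supp3 f = {m. f m \<noteq> 0}"

definition Rdeg :: "nat \<Rightarrow> ('a::zero) poly3 set" where
  "Rdeg d = {f. \<forall>i j k. f (i, j, k) \<noteq> 0 \<longrightarrow> i + j + k = d}"

definition Rhomog :: "('a::zero) poly3 set" where
  "Rhomog = (\<Union>d\<in>{1..}. Rdeg d)"

definition mu :: "nat \<Rightarrow> ('a::zero) poly3 set \<Rightarrow> real" where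
  "mu d A = real (card (A \<inter> Rdeg d)) / real (card (Rdeg d :: 'a poly3 set))"

definition eval3 :: "('a::zero \<Rightarrow> 'b::comm_ring_1) \<Rightarrow> 'a poly3 \<Rightarrow> 'b triple \<Rightarrow> 'b" where
  "eval3 emb f P = (case P of (x, y, z) \<Rightarrow>
     (\<Sum>m\<in>supp3 f. case m of (i, j, k) \<Rightarrow> emb (f m) * x ^ i * y ^ j * z ^ k))"

definition dx :: "('a::comm_ring_1) poly3 \<Rightarrow> 'a poly3" where
  "dx f = (\<lambda>(i, j, k). of_nat (Suc i) * f (Suc i, j, k))"
definition dy :: "('a::comm_ring_1) poly3 \<Rightarrow> 'a poly3" where
  "dy f = (\<lambda>(i, j, k). of_nat (Suc j) * f (i, Suc j, k))"
definition dz :: "('a::comm_ring_1) poly3 \<Rightarrow> 'a poly3" where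
  "dz f = (\<lambda>(i, j, k). of_nat (Suc k) * f (i, j, Suc k))"

definition singular_at :: "('a::comm_ring_1) poly3 \<Rightarrow> 'a triple \<Rightarrow> bool" where
  "singular_at f Q \<longleftrightarrow> eval3 id f Q = 0 \<and> eval3 id (dx f) Q = 0 \<and>
      eval3 id (dy f) Q = 0 \<and> eval3 id (dz f) Q = 0"

definition on_line :: "('a \<Rightarrow> 'b::comm_ring_1) \<Rightarrow> 'a triple \<Rightarrow> 'b triple \<Rightarrow> bool" where
  "on_line emb L P \<longleftrightarrow> (case L of (a, b, c) \<Rightarrow> case P of (x, y, z) \<Rightarrow>
      emb a * x + emb b * y + emb c * z = 0)"

definition smult3 :: "'b::times \<Rightarrow> 'b triple \<Rightarrow> 'b triple" where
  "smult3 c P = (case P of (x, y, z) \<Rightarrow> (c * x, c * y, c * z))"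

text \<open>Restriction of f to the line through P and w, in the affine parameter t:
  t \<mapsto> f(P + t w), as a univariate polynomial over the extension field.\<close>
definition restr :: "('a::zero \<Rightarrow> 'b::comm_ring_1) \<Rightarrow> 'a poly3 \<Rightarrow> 'b triple \<Rightarrow> 'b triple \<Rightarrow> 'b poly" where
  "restr emb f P w = (case P of (p1, p2, p3) \<Rightarrow> case w of (w1, w2, w3) \<Rightarrow>
     (\<Sum>m\<in>supp3 f. case m of (i, j, k) \<Rightarrow>
        smult (emb (f m)) ([:p1, w1:] ^ i * [:p2, w2:] ^ j * [:p3, w3:] ^ k)))"

text \<open>The restriction of f to L vanishes to order at least 2 at P (P a geometric point
  on L representing a closed point): with a second point w of L independent of P,
  t^2 divides f(P + t w).\<close>
definition tangent_at :: "('a::zero \<Rightarrow> 'b::field) \<Rightarrow> 'a poly3 \<Rightarrow> 'a triple \<Rightarrow> 'b triple \<Rightarrow> bool" where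
  "tangent_at emb f L P \<longleftrightarrow> (\<exists>w. on_line emb L w \<and> (\<forall>c. w \<noteq> smult3 c P) \<and>
      [:0, 1:] ^ 2 dvd restr emb f P w)"

definition emb3 :: "('a \<Rightarrow> 'b) \<Rightarrow> 'a triple \<Rightarrow> 'b triple" where
  "emb3 emb P = (case P of (x, y, z) \<Rightarrow> (emb x, emb y, emb z))"

definition Tset :: "('a::zero \<Rightarrow> 'b::field) \<Rightarrow> 'a triple \<Rightarrow> 'b triple \<Rightarrow> 'a poly3 set" where
  "Tset emb L P = {f \<in> Rhomog. tangent_at emb f L P}"

definition Sset :: "'a::comm_ring_1 triple \<Rightarrow> 'a poly3 set" where
  "Sset Q = {f \<in> Rhomog. singular_at f Q}"

text \<open>A_0(Q): union over all F_q-lines L through Q (each line given by some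
  nonzero coefficient vector; repetitions of proportional vectors are harmless).\<close>
definition A0set :: "('a::{comm_ring_1} \<Rightarrow> 'b::field) \<Rightarrow> 'a triple \<Rightarrow> 'a poly3 set" where
  "A0set emb Q = Rhomog - (\<Union>L\<in>{L. L \<noteq> (0, 0, 0) \<and> on_line id L Q}. Tset emb L (emb3 emb Q))"

definition ALset :: "('a::comm_ring_1 \<Rightarrow> 'b::field) \<Rightarrow> 'a triple \<Rightarrow> 'a triple \<Rightarrow> 'a poly3 set" where
  "ALset emb L Q = Tset emb L (emb3 emb Q) - Sset Q"

datatype ('a, 'b) cond =
    CT "'a triple" "'b triple"
  | CS "'a triple"
  | CA0 "'a triple"
  | CAL "'a triple" "'a triple"

fun cond_set :: "('a::comm_ring_1 \<Rightarrow> 'b::field) \<Rightarrow> ('a, 'b) cond \<Rightarrow> 'a poly3 set" where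
  "cond_set emb (CT L P) = Tset emb L P"
| "cond_set emb (CS Q) = Sset Q"
| "cond_set emb (CA0 Q) = A0set emb Q"
| "cond_set emb (CAL L Q) = ALset emb L Q"

fun cond_pt :: "('a \<Rightarrow> 'b) \<Rightarrow> ('a, 'b) cond \<Rightarrow> 'b triple" where
  "cond_pt emb (CT L P) = P"
| "cond_pt emb (CS Q) = emb3 emb Q"
| "cond_pt emb (CA0 Q) = emb3 emb Q"
| "cond_pt emb (CAL L Q) = emb3 emb Q"

fun cond_valid :: "('a::comm_ring_1 \<Rightarrow> 'b::field) \<Rightarrow> ('a, 'b) cond \<Rightarrow> bool" where
  "cond_valid emb (CT L P) \<longleftrightarrow> L \<noteq> (0, 0, 0) \<and> P \<noteq> (0, 0, 0) \<and> on_line emb L P"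
| "cond_valid emb (CS Q) \<longleftrightarrow> Q \<noteq> (0, 0, 0)"
| "cond_valid emb (CA0 Q) \<longleftrightarrow> Q \<noteq> (0, 0, 0)"
| "cond_valid emb (CAL L Q) \<longleftrightarrow> L \<noteq> (0, 0, 0) \<and> Q \<noteq> (0, 0, 0) \<and> on_line id L Q"

text \<open>D_j: a basic set or its complement in R_homog (flag True = complement).\<close>
definition dset :: "('a::comm_ring_1 \<Rightarrow> 'b::field) \<Rightarrow> bool \<times> ('a, 'b) cond \<Rightarrow> 'a poly3 set" where
  "dset emb D = (if fst D then Rhomog - cond_set emb (snd D) else cond_set emb (snd D))"

definition field_emb :: "('a::field \<Rightarrow> 'b::field) \<Rightarrow> bool" where
  "field_emb emb \<longleftrightarrow> emb 0 = 0 \<and> emb 1 = 1 \<and> (\<forall>x y. emb (x + y) = emb x + emb y)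
      \<and> (\<forall>x y. emb (x * y) = emb x * emb y)"

text \<open>Two geometric points define the same closed point of P^2 over F_q iff they are
  Galois conjugate (q-power Frobenius iterate) up to a nonzero scalar.\<close>
definition same_closed_pt :: "nat \<Rightarrow> 'b::field triple \<Rightarrow> 'b triple \<Rightarrow> bool" where
  "same_closed_pt q P P' \<longleftrightarrow> (\<exists>n c. c \<noteq> 0 \<and> (case P of (x, y, z) \<Rightarrow>
      P' = smult3 c (x ^ (q ^ n), y ^ (q ^ n), z ^ (q ^ n))))"

end

theory Submission
  imports Defs "HOL-Library.Poly_Mapping" "HOL-Library.Product_Plus" "HOL-Library.Function_Algebras"
    "HOL-Computational_Algebra.Primes" "HOL-Library.FuncSet"
begin

type_synonym 'a pm3 = "(nat \<times> nat \<times> nat) \<Rightarrow>\<^sub>0 'a"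

definition rhom :: "('a::comm_ring_1 \<Rightarrow> 'b::comm_ring_1) \<Rightarrow> bool" where
  "rhom f \<longleftrightarrow> f 0 = 0 \<and> f 1 = 1 \<and> (\<forall>x y. f (x + y) = f x + f y) \<and> (\<forall>x y. f (x * y) = f x * f y)"

lemma rhomD:
  assumes "rhom f"
  shows "f 0 = 0" "f 1 = 1" "f (x + y) = f x + f y" "f (x * y) = f x * f y"
  using assms unfolding rhom_def by auto

lemma rhom_sum: "rhom f \<Longrightarrow> f (\<Sum>i\<in>I. g i) = (\<Sum>i\<in>I. f (g i))"
  by (induction I rule: infinite_finite_induct) (auto simp: rhomD)

lemma rhom_prod: "rhom f \<Longrightarrow> f (\<Prod>i\<in>I. g i) = (\<Prod>i\<in>I. f (g i))"
  by (induction I rule: infinite_finite_induct) (auto simp: rhomD)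

lemma rhom_power: "rhom f \<Longrightarrow> f (x ^ n) = f x ^ n"
  by (induction n) (auto simp: rhomD)

lemma rhom_of_nat: "rhom f \<Longrightarrow> f (of_nat n) = of_nat n"
  by (induction n) (auto simp: rhomD)

lemma rhom_uminus: "rhom f \<Longrightarrow> f (- x) = - f x"
proof -
  assume h: "rhom f"
  have "f (- x) + f x = 0" using rhomD(3)[OF h, of "-x" x] by (simp add: rhomD[OF h])
  thus ?thesis by (simp add: eq_neg_iff_add_eq_0)
qed

lemma rhom_diff: "rhom f \<Longrightarrow> f (x - y) = f x - f y"
  using rhomD(3)[of f x "-y"] rhom_uminus[of f y] by simp

lemma rhom_id: "rhom id" by (simp add: rhom_def)
lemma rhom_comp: "rhom f \<Longrightarrow> rhom g \<Longrightarrow> rhom (f \<circ> g)" by (simp add: rhom_def)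

definition mono3 :: "nat \<times> nat \<times> nat \<Rightarrow> 'b::comm_ring_1 triple \<Rightarrow> 'b" where
  "mono3 m X = (case m of (i, j, k) \<Rightarrow> case X of (x, y, z) \<Rightarrow> x ^ i * y ^ j * z ^ k)"

lemma mono3_add: "mono3 (m + n) X = mono3 m X * mono3 n X"
  by (cases m; cases n; cases X) (simp add: mono3_def power_add algebra_simps)

lemma mono3_zero: "mono3 0 X = 1"
  by (cases X) (simp add: mono3_def zero_prod_def)

lemma mono3_emb3: "rhom f \<Longrightarrow> f (mono3 m X) = mono3 m (emb3 f X)"
  by (cases m; cases X) (simp add: mono3_def emb3_def rhomD rhom_power)

definition ev :: "('a::zero \<Rightarrow> 'b::comm_ring_1) \<Rightarrow> 'a pm3 \<Rightarrow> 'b triple \<Rightarrow> 'b" where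
  "ev \<phi> p X = (\<Sum>m\<in>Poly_Mapping.keys p. \<phi> (poly_mapping.lookup p m) * mono3 m X)"

lemma ev_superset:
  assumes "finite S" "Poly_Mapping.keys p \<subseteq> S" "\<phi> 0 = 0"
  shows "ev \<phi> p X = (\<Sum>m\<in>S. \<phi> (poly_mapping.lookup p m) * mono3 m X)"
  unfolding ev_def by (rule sum.mono_neutral_left) (use assms in \<open>auto simp: in_keys_iff\<close>)

lemma ev_zero [simp]: "ev \<phi> 0 X = 0"
  by (simp add: ev_def)

lemma ev_add:
  assumes "\<phi> 0 = 0" "\<And>x y. \<phi> (x + y) = \<phi> x + \<phi> y"
  shows "ev \<phi> (p + q) X = ev \<phi> p X + ev \<phi> q X"
proof -
  let ?S = "Poly_Mapping.keys p \<union> Poly_Mapping.keys q"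
  have "ev \<phi> (p + q) X = (\<Sum>m\<in>?S. \<phi> (poly_mapping.lookup (p + q) m) * mono3 m X)"
    using keys_add[of p q] assms by (intro ev_superset) auto
  also have "\<dots> = (\<Sum>m\<in>?S. \<phi> (poly_mapping.lookup p m) * mono3 m X) + (\<Sum>m\<in>?S. \<phi> (poly_mapping.lookup q m) * mono3 m X)"
    by (simp add: lookup_add assms sum.distrib distrib_right)
  also have "\<dots> = ev \<phi> p X + ev \<phi> q X"
    by (subst (1 2) ev_superset[of ?S]) (use assms in auto)
  finally show ?thesis .
qed

lemma ev_single:
  assumes "\<phi> 0 = 0"
  shows "ev \<phi> (Poly_Mapping.single m c) X = \<phi> c * mono3 m X"
  by (subst ev_superset[of "{m}"]) (use assms in auto)

lemma ev_sum:
  assumes "\<phi> 0 = 0" "\<And>x y. \<phi> (x + y) = \<phi> x + \<phi> y"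
  shows "ev \<phi> (\<Sum>i\<in>I. p i) X = (\<Sum>i\<in>I. ev \<phi> (p i) X)"
  by (induction I rule: infinite_finite_induct) (auto simp: ev_add assms)

lemma pm_expand:
  assumes "finite S" "Poly_Mapping.keys p \<subseteq> S"
  shows "p = (\<Sum>m\<in>S. Poly_Mapping.single m (poly_mapping.lookup p m))"
proof (rule poly_mapping_eqI)
  fix k
  have "poly_mapping.lookup (\<Sum>m\<in>S. Poly_Mapping.single m (poly_mapping.lookup p m)) k = (\<Sum>m\<in>S. (poly_mapping.lookup p m when m = k))"
    by (simp add: lookup_sum lookup_single)
  also have "\<dots> = (\<Sum>m\<in>S. if m = k then poly_mapping.lookup p k else 0)"
    by (intro sum.cong) (auto simp: when_def)
  also have "\<dots> = (if k \<in> S then poly_mapping.lookup p k else 0)"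
    using assms(1) by simp
  also have "\<dots> = poly_mapping.lookup p k"
    using assms(2) by (auto simp: in_keys_iff)
  finally show "poly_mapping.lookup p k = poly_mapping.lookup (\<Sum>m\<in>S. Poly_Mapping.single m (poly_mapping.lookup p m)) k" by simp
qed

lemma pm_mult_expand:
  fixes p q :: "'a::comm_ring_1 pm3"
  shows "p * q = (\<Sum>m\<in>Poly_Mapping.keys p. \<Sum>n\<in>Poly_Mapping.keys q.
     Poly_Mapping.single (m + n) (poly_mapping.lookup p m * poly_mapping.lookup q n))"
proof -
  have "p * q = (\<Sum>m\<in>Poly_Mapping.keys p. Poly_Mapping.single m (poly_mapping.lookup p m)) *
      (\<Sum>n\<in>Poly_Mapping.keys q. Poly_Mapping.single n (poly_mapping.lookup q n))"
    by (subst (1) pm_expand[of "Poly_Mapping.keys p" p], simp, simp,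
        subst (1) pm_expand[of "Poly_Mapping.keys q" q], simp_all)
  also have "\<dots> = (\<Sum>m\<in>Poly_Mapping.keys p. \<Sum>n\<in>Poly_Mapping.keys q.
     Poly_Mapping.single (m + n) (poly_mapping.lookup p m * poly_mapping.lookup q n))"
    by (simp add: sum_product mult_single)
  finally show ?thesis .
qed

lemma ev_mult:
  assumes "rhom \<phi>"
  shows "ev \<phi> (p * q) X = ev \<phi> p X * ev \<phi> q X"
proof -
  have "ev \<phi> (p * q) X = (\<Sum>m\<in>Poly_Mapping.keys p. \<Sum>n\<in>Poly_Mapping.keys q.
     \<phi> (poly_mapping.lookup p m * poly_mapping.lookup q n) * mono3 (m + n) X)"
    by (subst pm_mult_expand) (simp add: ev_sum ev_single rhomD[OF assms])
  also have "\<dots> = (\<Sum>m\<in>Poly_Mapping.keys p. \<phi> (poly_mapping.lookup p m) * mono3 m X) *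
     (\<Sum>n\<in>Poly_Mapping.keys q. \<phi> (poly_mapping.lookup q n) * mono3 n X)"
    by (simp add: sum_product rhomD[OF assms] mono3_add mult_ac)
  finally show ?thesis by (simp add: ev_def)
qed

lemma ev_one: "rhom \<phi> \<Longrightarrow> ev \<phi> 1 X = 1"
  using ev_single[of \<phi> 0 1 X] by (simp add: rhomD mono3_zero)

lemma ev_power: "rhom \<phi> \<Longrightarrow> ev \<phi> (p ^ n) X = ev \<phi> p X ^ n"
  by (induction n) (auto simp: ev_one ev_mult)

lemma ev_prod: "rhom \<phi> \<Longrightarrow> ev \<phi> (\<Prod>i\<in>I. p i) X = (\<Prod>i\<in>I. ev \<phi> (p i) X)"
  by (induction I rule: infinite_finite_induct) (auto simp: ev_one ev_mult)

lemma ev_map: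
  assumes "rhom \<psi>"
  shows "\<psi> (ev \<phi> p X) = ev (\<psi> \<circ> \<phi>) p (emb3 \<psi> X)"
  unfolding ev_def by (simp add: rhom_sum[OF assms] rhomD[OF assms] mono3_emb3[OF assms])

lemma lookup_map_hom: "\<psi> 0 = 0 \<Longrightarrow> poly_mapping.lookup (Poly_Mapping.map \<psi> p) k = \<psi> (poly_mapping.lookup p k)"
  by (simp add: map.rep_eq when_def)

lemma keys_map_sub: "Poly_Mapping.keys (Poly_Mapping.map \<psi> p) \<subseteq> Poly_Mapping.keys p"
  by (auto simp: in_keys_iff map.rep_eq when_def)

lemma ev_cmap:
  assumes "\<phi> 0 = 0" "\<psi> 0 = 0"
  shows "ev \<phi> (Poly_Mapping.map \<psi> p) X = ev (\<phi> \<circ> \<psi>) p X"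
  by (subst (1 2) ev_superset[of "Poly_Mapping.keys p"]) 
     (use assms keys_map_sub[of \<psi> p] in \<open>auto simp: lookup_map_hom\<close>)

lemma map_add_hom:
  assumes "\<psi> 0 = 0" "\<And>x y. \<psi> (x + y) = \<psi> x + \<psi> y"
  shows "Poly_Mapping.map \<psi> (p + q) = Poly_Mapping.map \<psi> p + Poly_Mapping.map \<psi> q"
  by (rule poly_mapping_eqI) (simp add: lookup_map_hom assms lookup_add)

lemma map_single_hom: "\<psi> 0 = 0 \<Longrightarrow> Poly_Mapping.map \<psi> (Poly_Mapping.single m c) = Poly_Mapping.single m (\<psi> c)"
  by (rule poly_mapping_eqI) (simp add: lookup_map_hom lookup_single when_def)

lemma map_zero_hom: "\<psi> 0 = 0 \<Longrightarrow> Poly_Mapping.map \<psi> 0 = 0"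
  by (rule poly_mapping_eqI) (simp add: lookup_map_hom)

lemma map_sum_hom:
  assumes "\<psi> 0 = 0" "\<And>x y. \<psi> (x + y) = \<psi> x + \<psi> y"
  shows "Poly_Mapping.map \<psi> (\<Sum>i\<in>I. p i) = (\<Sum>i\<in>I. Poly_Mapping.map \<psi> (p i))"
  by (induction I rule: infinite_finite_induct) (auto simp: map_add_hom assms map_zero_hom)

lemma map_mult_hom:
  fixes p q :: "'a::comm_ring_1 pm3"
  assumes "rhom \<psi>"
  shows "Poly_Mapping.map \<psi> (p * q) = Poly_Mapping.map \<psi> p * Poly_Mapping.map \<psi> q"
proof -
  have h0: "\<psi> 0 = 0" using assms by (simp add: rhomD)
  have "Poly_Mapping.map \<psi> (p * q) = (\<Sum>m\<in>Poly_Mapping.keys p. \<Sum>n\<in>Poly_Mapping.keys q.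
     Poly_Mapping.single (m + n) (\<psi> (poly_mapping.lookup p m) * \<psi> (poly_mapping.lookup q n)))"
    by (subst pm_mult_expand) (simp add: map_sum_hom rhomD[OF assms] map_single_hom)
  also have "\<dots> = (\<Sum>m\<in>Poly_Mapping.keys p. Poly_Mapping.single m (\<psi> (poly_mapping.lookup p m))) *
      (\<Sum>n\<in>Poly_Mapping.keys q. Poly_Mapping.single n (\<psi> (poly_mapping.lookup q n)))"
    by (simp add: sum_product mult_single)
  also have "\<dots> = Poly_Mapping.map \<psi> p * Poly_Mapping.map \<psi> q"
  proof -
    have e1: "Poly_Mapping.map \<psi> p = (\<Sum>m\<in>Poly_Mapping.keys p. Poly_Mapping.single m (\<psi> (poly_mapping.lookup p m)))"
    proof -
      have "Poly_Mapping.map \<psi> p = (\<Sum>m\<in>Poly_Mapping.keys p. Poly_Mapping.single m (poly_mapping.lookup (Poly_Mapping.map \<psi> p) m))"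
        by (rule pm_expand) (simp_all add: keys_map_sub)
      also have "\<dots> = (\<Sum>m\<in>Poly_Mapping.keys p. Poly_Mapping.single m (\<psi> (poly_mapping.lookup p m)))"
        by (simp add: lookup_map_hom h0)
      finally show ?thesis .
    qed
    have e2: "Poly_Mapping.map \<psi> q = (\<Sum>m\<in>Poly_Mapping.keys q. Poly_Mapping.single m (\<psi> (poly_mapping.lookup q m)))"
    proof -
      have "Poly_Mapping.map \<psi> q = (\<Sum>m\<in>Poly_Mapping.keys q. Poly_Mapping.single m (poly_mapping.lookup (Poly_Mapping.map \<psi> q) m))"
        by (rule pm_expand) (simp_all add: keys_map_sub)
      also have "\<dots> = (\<Sum>m\<in>Poly_Mapping.keys q. Poly_Mapping.single m (\<psi> (poly_mapping.lookup q m)))"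
        by (simp add: lookup_map_hom h0)
      finally show ?thesis .
    qed
    show ?thesis by (simp only: e1 e2)
  qed
  finally show ?thesis .
qed

lemma map_one_hom: "rhom \<psi> \<Longrightarrow> Poly_Mapping.map \<psi> (1 :: 'a::comm_ring_1 pm3) = 1"
  using map_single_hom[of \<psi> 0 1] by (simp add: rhomD)

lemma map_prod_hom:
  fixes p :: "'i \<Rightarrow> 'a::comm_ring_1 pm3"
  shows "rhom \<psi> \<Longrightarrow> Poly_Mapping.map \<psi> (\<Prod>i\<in>I. p i) = (\<Prod>i\<in>I. Poly_Mapping.map \<psi> (p i))"
  by (induction I rule: infinite_finite_induct) (auto simp: map_one_hom map_mult_hom)

lemma map_comp_hom:
  "\<psi>1 0 = 0 \<Longrightarrow> \<psi>2 0 = 0 \<Longrightarrow> Poly_Mapping.map \<psi>1 (Poly_Mapping.map \<psi>2 p) = Poly_Mapping.map (\<psi>1 \<circ> \<psi>2) p"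
  by (rule poly_mapping_eqI) (simp add: lookup_map_hom)

lemma map_id_hom: "Poly_Mapping.map (\<lambda>x. x) p = p"
  by (rule poly_mapping_eqI) (simp add: lookup_map_hom)

definition tdeg :: "nat \<times> nat \<times> nat \<Rightarrow> nat" where
  "tdeg m = fst m + fst (snd m) + snd (snd m)"

lemma tdeg_add: "tdeg (m + n) = tdeg m + tdeg n"
  by (simp add: tdeg_def)

definition homog :: "nat \<Rightarrow> ('a::zero) pm3 \<Rightarrow> bool" where
  "homog d p \<longleftrightarrow> (\<forall>m\<in>Poly_Mapping.keys p. tdeg m = d)"

lemma homog_mult:
  fixes p q :: "'a::comm_ring_1 pm3"
  assumes "homog a p" "homog b q" shows "homog (a + b) (p * q)"
  unfolding homog_def
proof
  fix m assume "m \<in> Poly_Mapping.keys (p * q)"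
  then obtain a' b' where "m = a' + b'" "a' \<in> Poly_Mapping.keys p" "b' \<in> Poly_Mapping.keys q"
    using keys_mult[of p q] by blast
  then show "tdeg m = a + b" using assms by (simp add: homog_def tdeg_add)
qed

lemma homog_one: "homog 0 (1 :: 'a::comm_ring_1 pm3)"
  by (simp add: homog_def tdeg_def)

lemma homog_power:
  fixes p :: "'a::comm_ring_1 pm3"
  shows "homog a p \<Longrightarrow> homog (a * n) (p ^ n)"
proof (induction n)
  case 0 then show ?case by (simp add: homog_one)
next
  case (Suc n)
  then show ?case using homog_mult[of a p "a * n" "p ^ n"] by (simp add: add.commute)
qed

lemma homog_single: "tdeg m = d \<Longrightarrow> homog d (Poly_Mapping.single m c)"
  by (simp add: homog_def)

lemma homog_zero: "homog d 0"
  by (simp add: homog_def)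

lemma homog_add: "homog d p \<Longrightarrow> homog d q \<Longrightarrow> homog d (p + q)"
  using keys_add[of p q] unfolding homog_def by blast

lemma homog_sum: "(\<And>i. i \<in> I \<Longrightarrow> homog d (p i)) \<Longrightarrow> homog d (\<Sum>i\<in>I. p i)"
  by (induction I rule: infinite_finite_induct) (auto simp: homog_zero homog_add)

lemma homog_prod:
  fixes p :: "'i \<Rightarrow> 'a::comm_ring_1 pm3"
  shows "finite I \<Longrightarrow> (\<And>i. i \<in> I \<Longrightarrow> homog a (p i)) \<Longrightarrow> homog (a * card I) (\<Prod>i\<in>I. p i)"
proof (induction I rule: finite_induct)
  case empty then show ?case by (simp add: homog_one)
next
  case (insert x F)
  have "homog (a + a * card F) (p x * (\<Prod>i\<in>F. p i))"
    by (rule homog_mult) (use insert in auto)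
  moreover have "a * card (insert x F) = a + a * card F" using insert by simp
  ultimately show ?case using insert by simp
qed

lemma homog_map: "homog d p \<Longrightarrow> homog d (Poly_Mapping.map \<psi> p)"
  using keys_map_sub[of \<psi> p] unfolding homog_def by blast

definition addhom :: "'v::ab_group_add set \<Rightarrow> ('v \<Rightarrow> 'w::ab_group_add) \<Rightarrow> bool" where
  "addhom V \<phi> \<longleftrightarrow> (\<forall>a\<in>V. \<forall>b\<in>V. \<phi> (a + b) = \<phi> a + \<phi> b)"

definition subgrp :: "'v::ab_group_add set \<Rightarrow> bool" where
  "subgrp V \<longleftrightarrow> 0 \<in> V \<and> (\<forall>a\<in>V. \<forall>b\<in>V. a + b \<in> V \<and> a - b \<in> V)"

definition sat :: "'v set \<Rightarrow> 'v set \<Rightarrow> ('v \<Rightarrow> 'w) \<Rightarrow> bool" where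
  "sat V A \<phi> \<longleftrightarrow> (\<forall>f\<in>V. \<forall>g\<in>V. \<phi> f = \<phi> g \<longrightarrow> (f \<in> A \<longleftrightarrow> g \<in> A))"

lemma addhom_zero:
  assumes "subgrp V" "addhom V \<phi>" shows "\<phi> 0 = 0"
proof -
  have "\<phi> (0 + 0) = \<phi> 0 + \<phi> 0" using assms unfolding subgrp_def addhom_def by blast
  thus ?thesis by simp
qed

lemma addhom_diff:
  assumes "subgrp V" "addhom V \<phi>" "a \<in> V" "b \<in> V" shows "\<phi> (a - b) = \<phi> a - \<phi> b"
proof -
  have "a - b \<in> V" using assms unfolding subgrp_def by blast
  hence "\<phi> ((a - b) + b) = \<phi> (a - b) + \<phi> b" using assms unfolding addhom_def by blast
  thus ?thesis by (simp add: algebra_simps)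
qed

lemma fiber_card:
  assumes sub: "subgrp V" and fin: "finite V" and hom: "addhom V \<phi>" and st: "sat V A \<phi>"
  shows "card (A \<inter> V) = card (\<phi> ` (A \<inter> V)) * card {k\<in>V. \<phi> k = 0}"
proof -
  let ?K = "{k\<in>V. \<phi> k = 0}"
  let ?F = "\<lambda>y. {f\<in>V. \<phi> f = y}"
  have eq: "A \<inter> V = (\<Union>y\<in>\<phi> ` (A \<inter> V). ?F y)"
    using st unfolding sat_def by blast
  have "card (\<Union>y\<in>\<phi> ` (A \<inter> V). ?F y) = (\<Sum>y\<in>\<phi> ` (A \<inter> V). card (?F y))"
    by (rule card_UN_disjoint) (use fin in auto)
  also have "\<dots> = (\<Sum>y\<in>\<phi> ` (A \<inter> V). card ?K)"
  proof (rule sum.cong[OF refl])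
    fix y assume "y \<in> \<phi> ` (A \<inter> V)"
    then obtain a where a: "a \<in> V" "y = \<phi> a" by blast
    have "bij_betw (\<lambda>k. a + k) ?K (?F y)"
    proof (rule bij_betw_byWitness[where f' = "\<lambda>f. f - a"])
      show "\<forall>k\<in>?K. (a + k) - a = k" by simp
      show "\<forall>f\<in>?F y. a + (f - a) = f" by simp
      show "(\<lambda>k. a + k) ` ?K \<subseteq> ?F y"
      proof
        fix f assume "f \<in> (\<lambda>k. a + k) ` ?K"
        then obtain k where k: "k \<in> V" "\<phi> k = 0" "f = a + k" by blast
        have "a + k \<in> V" using sub a k unfolding subgrp_def by blast
        moreover have "\<phi> (a + k) = \<phi> a" using hom a k unfolding addhom_def by simp
        ultimately show "f \<in> ?F y" using k a by simp
      qed
      show "(\<lambda>f. f - a) ` ?F y \<subseteq> ?K"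
      proof
        fix k assume "k \<in> (\<lambda>f. f - a) ` ?F y"
        then obtain f where f: "f \<in> V" "\<phi> f = y" "k = f - a" by blast
        have "f - a \<in> V" using sub a f unfolding subgrp_def by blast
        moreover have "\<phi> (f - a) = 0" using addhom_diff[OF sub hom f(1) a(1)] f a by simp
        ultimately show "k \<in> ?K" using f by simp
      qed
    qed
    hence "card ?K = card (?F y)" by (rule bij_betw_same_card)
    thus "card (?F y) = card ?K" by simp
  qed
  also have "\<dots> = card (\<phi> ` (A \<inter> V)) * card ?K" by simp
  finally show ?thesis using eq by simp
qed

lemma indep2:
  fixes \<phi> :: "'v::ab_group_add \<Rightarrow> 'w1::ab_group_add" and \<psi> :: "'v \<Rightarrow> 'w2::ab_group_add"
  assumes sub: "subgrp V" and fin: "finite V" and h1: "addhom V \<phi>" and h2: "addhom V \<psi>"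
    and s1: "sat V A \<phi>" and s2: "sat V B \<psi>"
    and joint: "\<forall>a\<in>V. \<forall>b\<in>V. \<exists>g\<in>V. \<phi> g = \<phi> a \<and> \<psi> g = \<psi> b"
  shows "card (A \<inter> B \<inter> V) * card V = card (A \<inter> V) * card (B \<inter> V)"
proof -
  define \<chi> where "\<chi> = (\<lambda>f. (\<phi> f, \<psi> f))"
  have hc: "addhom V \<chi>" using h1 h2 unfolding addhom_def \<chi>_def by simp
  have sc: "sat V (A \<inter> B) \<chi>" using s1 s2 unfolding sat_def \<chi>_def by blast
  have su: "sat V UNIV f" for f :: "'v \<Rightarrow> 'x" unfolding sat_def by blast
  have kc: "{k\<in>V. \<chi> k = 0} = {k\<in>V. \<phi> k = 0 \<and> \<psi> k = 0}" by (auto simp: \<chi>_def zero_prod_def)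
  have img1: "\<chi> ` (A \<inter> B \<inter> V) = \<phi> ` (A \<inter> V) \<times> \<psi> ` (B \<inter> V)"
  proof
    show "\<chi> ` (A \<inter> B \<inter> V) \<subseteq> \<phi> ` (A \<inter> V) \<times> \<psi> ` (B \<inter> V)" by (auto simp: \<chi>_def)
    show "\<phi> ` (A \<inter> V) \<times> \<psi> ` (B \<inter> V) \<subseteq> \<chi> ` (A \<inter> B \<inter> V)"
    proof
      fix y assume "y \<in> \<phi> ` (A \<inter> V) \<times> \<psi> ` (B \<inter> V)"
      then obtain a b where ab: "a \<in> A" "a \<in> V" "b \<in> B" "b \<in> V" "y = (\<phi> a, \<psi> b)" by blast
      then obtain g where g: "g \<in> V" "\<phi> g = \<phi> a" "\<psi> g = \<psi> b" using joint by blast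
      have "g \<in> A" using s1 g ab unfolding sat_def by metis
      moreover have "g \<in> B" using s2 g ab unfolding sat_def by metis
      moreover have "y = \<chi> g" using g ab by (simp add: \<chi>_def)
      ultimately show "y \<in> \<chi> ` (A \<inter> B \<inter> V)" using g by blast
    qed
  qed
  have img2: "\<chi> ` (UNIV \<inter> V) = \<phi> ` (UNIV \<inter> V) \<times> \<psi> ` (UNIV \<inter> V)"
  proof
    show "\<chi> ` (UNIV \<inter> V) \<subseteq> \<phi> ` (UNIV \<inter> V) \<times> \<psi> ` (UNIV \<inter> V)" by (auto simp: \<chi>_def)
    show "\<phi> ` (UNIV \<inter> V) \<times> \<psi> ` (UNIV \<inter> V) \<subseteq> \<chi> ` (UNIV \<inter> V)"
    proof
      fix y assume "y \<in> \<phi> ` (UNIV \<inter> V) \<times> \<psi> ` (UNIV \<inter> V)"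
      then obtain a b where ab: "a \<in> V" "b \<in> V" "y = (\<phi> a, \<psi> b)" by blast
      then obtain g where g: "g \<in> V" "\<phi> g = \<phi> a" "\<psi> g = \<psi> b" using joint by blast
      moreover have "y = \<chi> g" using g ab by (simp add: \<chi>_def)
      ultimately show "y \<in> \<chi> ` (UNIV \<inter> V)" by blast
    qed
  qed
  define kc' where "kc' = card {k\<in>V. \<chi> k = 0}"
  define k1 where "k1 = card {k\<in>V. \<phi> k = 0}"
  define k2 where "k2 = card {k\<in>V. \<psi> k = 0}"
  define a where "a = card (\<phi> ` (A \<inter> V))"
  define b where "b = card (\<psi> ` (B \<inter> V))"
  define s where "s = card (\<phi> ` (UNIV \<inter> V))"
  define t where "t = card (\<psi> ` (UNIV \<inter> V))"
  have e1: "card (A \<inter> B \<inter> V) = a * b * kc'"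
    using fiber_card[OF sub fin hc sc] img1 fin unfolding kc'_def a_def b_def
    by (simp add: card_cartesian_product Int_assoc)
  have e2: "card V = s * t * kc'"
    using fiber_card[OF sub fin hc su] img2 fin unfolding kc'_def s_def t_def
    by (simp add: card_cartesian_product)
  have e3: "card (A \<inter> V) = a * k1" using fiber_card[OF sub fin h1 s1] unfolding a_def k1_def by simp
  have e4: "card V = s * k1" using fiber_card[OF sub fin h1 su] unfolding s_def k1_def by simp
  have e5: "card (B \<inter> V) = b * k2" using fiber_card[OF sub fin h2 s2] unfolding b_def k2_def by simp
  have e6: "card V = t * k2" using fiber_card[OF sub fin h2 su] unfolding t_def k2_def by simp
  have "0 \<in> V" using sub unfolding subgrp_def by blast
  hence "s > 0" "t > 0" unfolding s_def t_def using fin card_gt_0_iff by blast+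
  have key: "kc' * card V * (s * t) = k1 * k2 * (s * t)"
  proof -
    have "kc' * card V * (s * t) = card V * card V" using e2 by (simp add: mult_ac)
    also have "\<dots> = (s * k1) * (t * k2)" using e4 e6 by simp
    finally show ?thesis by (simp add: mult_ac)
  qed
  hence "kc' * card V = k1 * k2" using \<open>s > 0\<close> \<open>t > 0\<close> by simp
  thus ?thesis using e1 e3 e5 by (simp add: mult_ac)
qed

definition muV :: "'v set \<Rightarrow> 'v set \<Rightarrow> real" where
  "muV V A = real (card (A \<inter> V)) / real (card V)"

lemma indep_n:
  fixes J :: "nat \<Rightarrow> 'v::ab_group_add \<Rightarrow> 'w::ab_group_add"
  assumes sub: "subgrp V" and fin: "finite V" and hom: "\<And>i. i < N \<Longrightarrow> addhom V (J i)"
    and st: "\<And>i. i < N \<Longrightarrow> sat V (A i) (J i)"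
    and sep: "\<And>i f. i < N \<Longrightarrow> f \<in> V \<Longrightarrow> \<exists>g\<in>V. J i g = J i f \<and> (\<forall>j<N. j \<noteq> i \<longrightarrow> J j g = 0)"
  shows "n \<le> N \<Longrightarrow> muV V (\<Inter>i<n. A i) = (\<Prod>i<n. muV V (A i))"
proof (induction n)
  case 0
  have "0 \<in> V" using sub unfolding subgrp_def by blast
  hence "card V > 0" using fin card_gt_0_iff by blast
  then show ?case by (simp add: muV_def)
next
  case (Suc n)
  hence nN: "n < N" by simp
  define B where "B = (\<Inter>i<n. A i)"
  define \<psi> where "\<psi> = (\<lambda>f. (\<lambda>i. if i < n then J i f else 0))"
  have h2: "addhom V \<psi>"
    using hom nN unfolding addhom_def \<psi>_def by (auto simp: fun_eq_iff)
  have s2: "sat V B \<psi>"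
    unfolding sat_def B_def \<psi>_def
  proof (intro ballI impI)
    fix f g assume fg: "f \<in> V" "g \<in> V" "(\<lambda>i. if i < n then J i f else 0) = (\<lambda>i. if i < n then J i g else 0)"
    have eqJ: "J i f = J i g" if "i < n" for i using fun_cong[OF fg(3), of i] that by simp
    have "f \<in> A i \<longleftrightarrow> g \<in> A i" if "i < n" for i
    proof -
      have "i < N" using that nN by simp
      then show ?thesis using st[OF \<open>i < N\<close>] fg eqJ[OF that] unfolding sat_def by blast
    qed
    thus "f \<in> \<Inter> (A ` {..<n}) \<longleftrightarrow> g \<in> \<Inter> (A ` {..<n})" by blast
  qed
  have joint: "\<forall>a\<in>V. \<forall>b\<in>V. \<exists>g\<in>V. J n g = J n a \<and> \<psi> g = \<psi> b"
  proof (intro ballI)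
    fix a b assume ab: "a \<in> V" "b \<in> V"
    obtain g1 where g1: "g1 \<in> V" "J n g1 = J n a" "\<forall>j<N. j \<noteq> n \<longrightarrow> J j g1 = 0"
      using sep[OF nN ab(1)] by blast
    obtain g2 where g2: "g2 \<in> V" "J n g2 = J n b" "\<forall>j<N. j \<noteq> n \<longrightarrow> J j g2 = 0"
      using sep[OF nN ab(2)] by blast
    have bg: "b - g2 \<in> V" using sub ab g2 unfolding subgrp_def by blast
    hence gV: "g1 + (b - g2) \<in> V" using sub g1 unfolding subgrp_def by blast
    have Jg: "J j (g1 + (b - g2)) = J j g1 + (J j b - J j g2)" if "j < N" for j
      using hom[OF that] addhom_diff[OF sub hom[OF that] ab(2) g2(1)] g1(1) bg
      unfolding addhom_def by simp
    show "\<exists>g\<in>V. J n g = J n a \<and> \<psi> g = \<psi> b"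
    proof (intro bexI conjI)
      show "J n (g1 + (b - g2)) = J n a" using Jg[OF nN] g1 g2 by simp
      show "\<psi> (g1 + (b - g2)) = \<psi> b"
        unfolding \<psi>_def using Jg g1 g2 nN by (auto simp: fun_eq_iff)
    qed (rule gV)
  qed
  have c: "card (A n \<inter> B \<inter> V) * card V = card (A n \<inter> V) * card (B \<inter> V)"
    by (rule indep2[OF sub fin hom[OF nN] h2 st[OF nN] s2 joint])
  have "0 \<in> V" using sub unfolding subgrp_def by blast
  hence cV: "card V > 0" using fin card_gt_0_iff by blast
  have "(\<Inter>i<Suc n. A i) = A n \<inter> B" unfolding B_def lessThan_Suc by auto
  hence "muV V (\<Inter>i<Suc n. A i) = muV V (A n) * muV V B"
  proof -
    assume eq: "(\<Inter>i<Suc n. A i) = A n \<inter> B"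
    have "real (card (A n \<inter> B \<inter> V)) * real (card V) = real (card (A n \<inter> V)) * real (card (B \<inter> V))"
      using c by (metis of_nat_mult)
    thus ?thesis unfolding muV_def eq using cV by (simp add: field_simps)
  qed
  then show ?case using Suc.IH Suc.prems unfolding B_def by (simp add: mult.commute)
qed

lemma ff_power_card: 
  fixes x :: "'c::{finite,field}"
  shows "x ^ card (UNIV :: 'c set) = x"
proof (cases "x = 0")
  case False
  have "x * (\<Prod>y\<in>UNIV-{0}. x * y) = x * x ^ (card (UNIV :: 'c set) - 1) * \<Prod>(UNIV-{0})"
    by (simp add: prod.distrib mult_ac)
  also have "x * x ^ (card (UNIV :: 'c set) - 1) = x ^ Suc (card (UNIV :: 'c set) - 1)"
    by (subst power_Suc) auto
  also have "Suc (card (UNIV :: 'c set) - 1) = card (UNIV :: 'c set)"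
    using finite_UNIV_card_ge_0[where ?'a = 'c] by simp
  also have "(\<Prod>y\<in>UNIV-{0}. x * y) = (\<Prod>y\<in>UNIV-{0}. y)"
    by (rule prod.reindex_bij_witness[of _ "\<lambda>y. y / x" "\<lambda>y. x * y"]) (use False in auto)
  finally show ?thesis
    by simp
qed (use finite_UNIV_card_ge_0[where ?'a = 'c] in auto)

lemma ff_card_ge2: "card (UNIV :: 'c::{finite,field} set) \<ge> 2"
proof -
  have "{0, 1::'c} \<subseteq> UNIV" by simp
  hence "card {0, 1::'c} \<le> card (UNIV :: 'c set)" by (intro card_mono) auto
  thus ?thesis by simp
qed

lemma ff_fermat:
  fixes x :: "'c::{finite,field}"
  assumes "x \<noteq> 0"
  shows "x ^ (card (UNIV :: 'c set) - 1) = 1"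
proof -
  have "x * x ^ (card (UNIV :: 'c set) - 1) = x ^ Suc (card (UNIV :: 'c set) - 1)" by simp
  also have "Suc (card (UNIV :: 'c set) - 1) = card (UNIV :: 'c set)"
    using ff_card_ge2[where 'c='c] by simp
  finally have "x * x ^ (card (UNIV :: 'c set) - 1) = x * 1" by (simp add: ff_power_card)
  thus ?thesis using assms by simp
qed

lemma ff_CHAR_pos: "CHAR('c::{finite,field}) > 0"
  by (rule finite_imp_CHAR_pos) simp

lemma ff_CHAR_prime: "prime CHAR('c::{finite,field})"
  using ff_CHAR_pos prime_CHAR_semidom by blast

lemma of_nat_mod_CHAR: "of_nat (n mod CHAR('c)) = (of_nat n :: 'c::comm_ring_1)"
proof -
  have "of_nat n = (of_nat (n div CHAR('c) * CHAR('c) + n mod CHAR('c)) :: 'c)" by simp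
  also have "\<dots> = of_nat (n mod CHAR('c))" by (simp only: of_nat_add of_nat_mult of_nat_CHAR) simp
  finally show ?thesis by simp
qed

definition fpsub :: "'c::comm_ring_1 set \<Rightarrow> bool" where
  "fpsub H \<longleftrightarrow> 0 \<in> H \<and> (\<forall>a\<in>H. \<forall>b\<in>H. a + b \<in> H) \<and> (\<forall>a\<in>H. \<forall>k. of_nat k * a \<in> H)"

lemma fpsub_extend:
  fixes H :: "'c::{finite,field} set"
  assumes H: "fpsub H" and x: "x \<notin> H"
  shows "\<exists>H'::'c set. fpsub H' \<and> card H' = card H * CHAR('c)"
proof -
  define p where "p = CHAR('c)"
  have p0: "p > 0" unfolding p_def by (rule ff_CHAR_pos)
  define f where "f = (\<lambda>(h, k). h + of_nat k * x)"
  define H' where "H' = f ` (H \<times> {..<p})"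
  have neg: "- a \<in> H" if "a \<in> H" for a
  proof -
    have "of_nat (p - 1) * a \<in> H" using H that unfolding fpsub_def by blast
    moreover have "(of_nat (p - 1) :: 'c) = - 1"
    proof -
      have "(of_nat (p - 1) :: 'c) + 1 = of_nat p" using p0 by (metis Suc_diff_1 of_nat_Suc add.commute)
      thus ?thesis unfolding p_def by (simp add: eq_neg_iff_add_eq_0)
    qed
    ultimately show ?thesis by simp
  qed
  have inj: "inj_on f (H \<times> {..<p})"
  proof (rule inj_onI, clarify)
    fix h1 k1 h2 k2 assume a: "h1 \<in> H" "k1 < p" "h2 \<in> H" "k2 < p" "f (h1, k1) = f (h2, k2)"
    have False if lt: "ka < kb" "kb < p" "ha \<in> H" "hb \<in> H" "ha + of_nat ka * x = hb + of_nat kb * x" for ha hb ka kb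
    proof -
      define c where "c = (of_nat (kb - ka) :: 'c)"
      have "c \<noteq> 0"
      proof
        assume "c = 0"
        hence "p dvd (kb - ka)" unfolding c_def p_def using of_nat_eq_0_iff_char_dvd by blast
        thus False using lt by (meson diff_less_mono2 dvd_imp_le less_imp_diff_less zero_less_diff not_le diff_le_self order.strict_trans2 diff_less zero_less_iff_neq_zero) 
      qed
      have cx: "c * x = ha - hb"
      proof -
        have "of_nat kb = (of_nat ka + c :: 'c)" unfolding c_def using lt by (simp flip: of_nat_add)
        thus ?thesis using lt(5) by (simp add: algebra_simps)
      qed
      have "x = c ^ (card (UNIV :: 'c set) - 1) * x" using ff_fermat[OF \<open>c \<noteq> 0\<close>] by simp
      also have "\<dots> = c ^ (card (UNIV :: 'c set) - 2) * (c * x)"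
      proof -
        have "card (UNIV :: 'c set) - 1 = Suc (card (UNIV :: 'c set) - 2)" using ff_card_ge2[where 'c='c] by simp
        thus ?thesis by (simp add: mult_ac)
      qed
      also have "\<dots> = c ^ (card (UNIV :: 'c set) - 2) * (ha + - hb)"
        using cx by simp
      also have "c ^ (card (UNIV :: 'c set) - 2) = of_nat ((kb - ka) ^ (card (UNIV :: 'c set) - 2))"
        unfolding c_def by simp
      finally have "x = of_nat ((kb - ka) ^ (card (UNIV :: 'c set) - 2)) * (ha + - hb)" .
      moreover have "ha + - hb \<in> H" using H neg lt unfolding fpsub_def by blast
      ultimately have "x \<in> H" using H unfolding fpsub_def by metis
      thus False using x by simp
    qed
    hence "k1 = k2" using a unfolding f_def by (metis linorder_neqE_nat case_prod_conv)
    thus "h1 = h2 \<and> k1 = k2" using a unfolding f_def by simp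
  qed
  have "fpsub H'"
    unfolding fpsub_def
  proof (intro conjI ballI allI)
    show "0 \<in> H'" unfolding H'_def f_def using H p0 unfolding fpsub_def by (auto intro!: image_eqI[of _ _ "(0, 0)"])
  next
    fix a b assume "a \<in> H'" "b \<in> H'"
    then obtain h1 k1 h2 k2 where ab: "h1 \<in> H" "h2 \<in> H" "a = h1 + of_nat k1 * x" "b = h2 + of_nat k2 * x"
      unfolding H'_def f_def by auto
    have "a + b = (h1 + h2) + of_nat ((k1 + k2) mod p) * x"
      unfolding ab p_def of_nat_mod_CHAR by (simp add: algebra_simps)
    moreover have "h1 + h2 \<in> H" using H ab unfolding fpsub_def by blast
    moreover have "(k1 + k2) mod p < p" using p0 by simp
    ultimately show "a + b \<in> H'" unfolding H'_def f_def by (auto intro!: image_eqI[of _ _ "(h1 + h2, (k1 + k2) mod p)"])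
  next
    fix a k assume "a \<in> H'"
    then obtain h1 k1 where ab: "h1 \<in> H" "a = h1 + of_nat k1 * x"
      unfolding H'_def f_def by auto
    have "of_nat k * a = of_nat k * h1 + of_nat ((k * k1) mod p) * x"
      unfolding ab p_def of_nat_mod_CHAR by (simp add: algebra_simps)
    moreover have "of_nat k * h1 \<in> H" using H ab unfolding fpsub_def by blast
    moreover have "(k * k1) mod p < p" using p0 by simp
    ultimately show "of_nat k * a \<in> H'" unfolding H'_def f_def by (auto intro!: image_eqI[of _ _ "(of_nat k * h1, (k * k1) mod p)"])
  qed
  moreover have "card H' = card H * p"
    unfolding H'_def using card_image[OF inj] by (simp add: card_cartesian_product)
  ultimately show ?thesis unfolding p_def by blast
qed

lemma ff_card_prime_power: "\<exists>n. card (UNIV :: 'c::{finite,field} set) = CHAR('c) ^ n"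
proof -
  have main: "\<And>H::'c set. fpsub H \<Longrightarrow> (\<exists>n. card H = CHAR('c) ^ n) \<Longrightarrow> \<exists>n. card (UNIV :: 'c set) = CHAR('c) ^ n"
  proof -
    fix H :: "'c set"
    show "fpsub H \<Longrightarrow> (\<exists>n. card H = CHAR('c) ^ n) \<Longrightarrow> \<exists>n. card (UNIV :: 'c set) = CHAR('c) ^ n"
    proof (induction "card (UNIV :: 'c set) - card H" arbitrary: H rule: less_induct)
      case (less H)
      show ?case
      proof (cases "H = UNIV")
        case True then show ?thesis using less.prems by simp
      next
        case False
        then obtain x where "x \<notin> H" by blast
        then obtain H' :: "'c set" where H': "fpsub H'" "card H' = card H * CHAR('c)"
          using fpsub_extend[OF less.prems(1)] by blast
        obtain n where n: "card H = CHAR('c) ^ n" using less.prems by blast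
        have "CHAR('c) \<ge> 2" using ff_CHAR_prime[where 'c='c] prime_ge_2_nat by blast
        moreover have "card H > 0" using less.prems(1) unfolding fpsub_def
          by (metis card_gt_0_iff empty_iff finite)
        ultimately have "card H' > card H" using H' by simp
        moreover have "card H' \<le> card (UNIV :: 'c set)" by (rule card_mono) auto
        ultimately have "card (UNIV :: 'c set) - card H' < card (UNIV :: 'c set) - card H" by linarith
        moreover have "\<exists>n. card H' = CHAR('c) ^ n" using H' n by (metis power_Suc2)
        ultimately show ?thesis using less.hyps H'(1) by blast
      qed
    qed
  qed
  have "fpsub {0::'c}" unfolding fpsub_def by simp
  moreover have "card {0::'c} = CHAR('c) ^ 0" by simp
  ultimately show ?thesis using main by blast
qed

lemma field_emb_rhom: "field_emb emb \<Longrightarrow> rhom emb"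
  by (simp add: field_emb_def rhom_def)

lemma rhom_inj:
  fixes emb :: "'a::field \<Rightarrow> 'b::field"
  assumes "rhom emb" shows "inj emb"
proof (rule injI)
  fix x y assume e: "emb x = emb y"
  show "x = y"
  proof (rule ccontr)
    assume "x \<noteq> y"
    hence "emb ((x - y) * inverse (x - y)) = 1" by (simp add: rhomD[OF assms])
    moreover have "emb (x - y) = 0" using e by (simp add: rhom_diff[OF assms])
    ultimately show False by (simp add: rhomD[OF assms])
  qed
qed

lemma rhom_CHAR:
  fixes emb :: "'a::field \<Rightarrow> 'b::field"
  assumes "rhom emb" shows "CHAR('b) = CHAR('a)"
proof -
  have iff: "of_nat n = (0::'b) \<longleftrightarrow> of_nat n = (0::'a)" for n
  proof -
    have "(of_nat n :: 'b) = emb (of_nat n)" by (simp add: rhom_of_nat[OF assms])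
    moreover have "emb (of_nat n) = 0 \<longleftrightarrow> (of_nat n :: 'a) = 0"
      using inj_eq[OF rhom_inj[OF assms], of "of_nat n" 0] rhomD(1)[OF assms] by simp
    ultimately show ?thesis by simp
  qed
  show ?thesis
    by (rule CHAR_eqI) (simp_all add: iff of_nat_eq_0_iff_char_dvd)
qed

context
  fixes emb :: "'a::{finite,field} \<Rightarrow> 'b::{finite,field}"
  assumes emb: "rhom emb"
begin

lemma qq_CHAR_power: "\<exists>r. card (UNIV :: 'a set) = CHAR('b) ^ r"
  using ff_card_prime_power[where 'c='a] rhom_CHAR[OF emb] by simp

lemma frob_rhom: "rhom (\<lambda>x::'b. x ^ (card (UNIV :: 'a set) ^ k))"
proof -
  obtain r where r: "card (UNIV :: 'a set) = CHAR('b) ^ r" using qq_CHAR_power by blast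
  have m: "card (UNIV :: 'a set) ^ k = CHAR('b) ^ (r * k)" unfolding r by (simp add: power_mult)
  have pos: "card (UNIV :: 'a set) ^ k > 0" using finite_UNIV_card_ge_0[where 'a='a] by simp
  show ?thesis unfolding rhom_def
    using pos freshmans_dream'[OF ff_CHAR_prime m] by (simp add: power_mult_distrib)
qed

lemma frob_zero_iff: "(x::'b) ^ (card (UNIV :: 'a set) ^ k) = 0 \<longleftrightarrow> x = 0"
  using finite_UNIV_card_ge_0[where 'a='a] by simp

lemma frob_inj: "(x::'b) ^ (card (UNIV :: 'a set) ^ k) = y ^ (card (UNIV :: 'a set) ^ k) \<Longrightarrow> x = y"
proof -
  assume "x ^ (card (UNIV :: 'a set) ^ k) = y ^ (card (UNIV :: 'a set) ^ k)"
  hence "(x - y) ^ (card (UNIV :: 'a set) ^ k) = 0" using rhom_diff[OF frob_rhom[of k], of x y] by simp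
  thus "x = y" using frob_zero_iff by simp
qed

lemma frob_period: "\<exists>e>0. \<forall>x::'b. x ^ (card (UNIV :: 'a set) ^ e) = x"
proof -
  define F where "F = (\<lambda>n. (\<lambda>x::'b. x ^ (card (UNIV :: 'a set) ^ n)))"
  have "\<not> inj F"
  proof
    assume "inj F"
    hence "finite (UNIV :: nat set)"
      using finite_imageD[of F UNIV] finite_subset[of "range F" "UNIV :: ('b \<Rightarrow> 'b) set"] by simp
    thus False by simp
  qed
  then obtain a b where ab: "F a = F b" "a \<noteq> b" unfolding inj_def by blast
  have main: "\<exists>e>0. \<forall>x::'b. x ^ (card (UNIV :: 'a set) ^ e) = x" if "F a = F b" "a < b" for a b
  proof (intro exI conjI allI)
    show "b - a > 0" using that by simp
    fix x :: 'b
    have "x ^ (card (UNIV :: 'a set) ^ a) = x ^ (card (UNIV :: 'a set) ^ b)" using fun_cong[OF that(1), of x] unfolding F_def .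
    also have "card (UNIV :: 'a set) ^ b = card (UNIV :: 'a set) ^ (b - a) * card (UNIV :: 'a set) ^ a" using that by (simp flip: power_add)
    finally have "x ^ (card (UNIV :: 'a set) ^ a) = (x ^ (card (UNIV :: 'a set) ^ (b - a))) ^ (card (UNIV :: 'a set) ^ a)" by (simp add: power_mult)
    thus "x ^ (card (UNIV :: 'a set) ^ (b - a)) = x" using frob_inj by metis
  qed
  show ?thesis using ab main by (metis linorder_neqE_nat)
qed

lemma fixed_range: "((x::'b) ^ card (UNIV :: 'a set) = x) \<longleftrightarrow> x \<in> range emb"
proof -
  have sub: "range emb \<subseteq> {x::'b. x ^ card (UNIV :: 'a set) = x}"
  proof
    fix y assume "y \<in> range emb"
    then obtain a where "y = emb a" by blast
    thus "y \<in> {x. x ^ card (UNIV :: 'a set) = x}" by (simp flip: rhom_power[OF emb] add: ff_power_card)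
  qed
  define P where "P = [:0, -1:] + monom (1::'b) (card (UNIV :: 'a set))"
  have qtwo: "card (UNIV :: 'a set) \<ge> 2" by (rule ff_card_ge2)
  have dP: "degree P = card (UNIV :: 'a set)" unfolding P_def using qtwo by (subst degree_add_eq_right) (auto simp: degree_monom_eq)
  hence "P \<noteq> 0" using qtwo by auto
  have roots: "{x. poly P x = 0} = {x::'b. x ^ card (UNIV :: 'a set) = x}" unfolding P_def by (auto simp: poly_monom)
  have c1: "card {x::'b. x ^ card (UNIV :: 'a set) = x} \<le> card (UNIV :: 'a set)" using card_poly_roots_bound[OF \<open>P \<noteq> 0\<close>] dP roots by simp
  have c2: "card (range emb) = card (UNIV :: 'a set)" using rhom_inj[OF emb] by (simp add: card_image)
  have c3: "card (range emb) \<le> card {x::'b. x ^ card (UNIV :: 'a set) = x}" using sub by (intro card_mono) auto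
  have "range emb = {x::'b. x ^ card (UNIV :: 'a set) = x}"
    apply (rule card_subset_eq)
      apply simp
     apply (rule sub)
    using c1 c2 c3 by linarith
  thus ?thesis by blast
qed

end

lemma irred_quad: "\<exists>r1 r0::'b::{finite,field}. \<forall>s. s * s + r1 * s + r0 \<noteq> 0"
proof -
  define \<Phi> where "\<Phi> = (\<lambda>(s1::'b, s2::'b). (- (s1 + s2), s1 * s2))"
  have e: "\<Phi> (0, 1) = \<Phi> (1, 0)" unfolding \<Phi>_def by simp
  have ne: "((0::'b), (1::'b)) \<noteq> (1, 0)" by simp
  have "\<not> inj \<Phi>"
  proof
    assume "inj \<Phi>"
    hence "(0::'b, 1::'b) = (1, 0)" using e by (rule injD)
    thus False using ne by blast
  qed
  have "\<not> surj \<Phi>"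
  proof
    assume "surj \<Phi>"
    hence "inj_on \<Phi> UNIV" by (intro finite_surj_inj) auto
    thus False using \<open>\<not> inj \<Phi>\<close> by blast
  qed
  then obtain r where r: "r \<notin> range \<Phi>" by blast
  obtain r1 r0 where rr: "r = (r1, r0)" by (cases r)
  have "s * s + r1 * s + r0 \<noteq> 0" for s
  proof
    assume h: "s * s + r1 * s + r0 = 0"
    have "r0 = (s * s + r1 * s + r0) - (s * s + r1 * s)" by simp
    also have "\<dots> = - (s * s + r1 * s)" using h by simp
    also have "\<dots> = s * (- r1 - s)" by (simp add: algebra_simps)
    finally have "r0 = s * (- r1 - s)" .
    hence "\<Phi> (s, - r1 - s) = (r1, r0)" unfolding \<Phi>_def by simp
    thus False using r rr by (metis rangeI)
  qed
  thus ?thesis by blast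
qed

definition lf :: "'b::comm_ring_1 triple \<Rightarrow> 'b triple \<Rightarrow> 'b" where
  "lf a X = (case a of (a1, a2, a3) \<Rightarrow> case X of (x, y, z) \<Rightarrow> a1 * x + a2 * y + a3 * z)"

definition linpm :: "'b::comm_ring_1 triple \<Rightarrow> 'b pm3" where
  "linpm a = (case a of (a1, a2, a3) \<Rightarrow> Poly_Mapping.single (1, 0, 0) a1 +
     Poly_Mapping.single (0, 1, 0) a2 + Poly_Mapping.single (0, 0, 1) a3)"

lemma ev_linpm: "ev id (linpm a) X = lf a X"
  by (cases a; cases X) (simp add: linpm_def lf_def ev_add ev_single mono3_def)

lemma homog_linpm: "homog 1 (linpm a)"
  by (cases a) (simp add: linpm_def homog_add homog_single tdeg_def)

lemma lin_solve:
  fixes x :: "'b::field"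
  assumes "x \<noteq> 0" "c1 * u + x * v = 0"
  shows "v = (u / x) * (- c1)"
proof -
  have "x * v = - (c1 * u)" using assms(2) by (simp add: eq_neg_iff_add_eq_0 add.commute)
  hence "v = - (c1 * u) / x" using assms(1) by (simp add: field_simps)
  thus ?thesis by (simp add: field_simps)
qed

lemma lin_pair:
  fixes P :: "'b::field triple"
  assumes "P \<noteq> (0, 0, 0)"
  shows "\<exists>a b. lf a P = 0 \<and> lf b P = 0 \<and> (\<forall>Q. lf a Q = 0 \<and> lf b Q = 0 \<longrightarrow> (\<exists>c. Q = smult3 c P))"
proof -
  obtain x y z where P: "P = (x, y, z)" by (cases P)
  show ?thesis
  proof (cases "x \<noteq> 0")
    case True
    have A: "lf (- y, x, 0) P = 0 \<and> lf (- z, 0, x) P = 0" by (simp add: lf_def P algebra_simps)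
    have C: "\<forall>Q. lf (- y, x, 0) Q = 0 \<and> lf (- z, 0, x) Q = 0 \<longrightarrow> (\<exists>c. Q = smult3 c P)"
    proof (intro allI impI)
      fix Q assume h: "lf (- y, x, 0) Q = 0 \<and> lf (- z, 0, x) Q = 0"
      obtain u v w where Q: "Q = (u, v, w)" by (cases Q)
      have "v = (u / x) * y" using lin_solve[of x "-y" u v] h True by (simp add: lf_def Q algebra_simps)
      moreover have "w = (u / x) * z" using lin_solve[of x "-z" u w] h True by (simp add: lf_def Q algebra_simps)
      ultimately have "v = (u / x) * y" "w = (u / x) * z" by simp_all
      thus "\<exists>c. Q = smult3 c P" using True by (intro exI[of _ "u / x"]) (simp add: Q P smult3_def)
    qed
    show ?thesis using A C by blast
  next
    case x0: False
    show ?thesis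
    proof (cases "y \<noteq> 0")
      case True
      have A: "lf (y, - x, 0) P = 0 \<and> lf (0, - z, y) P = 0" by (simp add: lf_def P algebra_simps)
      have C: "\<forall>Q. lf (y, - x, 0) Q = 0 \<and> lf (0, - z, y) Q = 0 \<longrightarrow> (\<exists>c. Q = smult3 c P)"
      proof (intro allI impI)
        fix Q assume h: "lf (y, - x, 0) Q = 0 \<and> lf (0, - z, y) Q = 0"
        obtain u v w where Q: "Q = (u, v, w)" by (cases Q)
        have "u = (v / y) * x" using lin_solve[of y "-x" v u] h True by (simp add: lf_def Q algebra_simps)
      moreover have "w = (v / y) * z" using lin_solve[of y "-z" v w] h True by (simp add: lf_def Q algebra_simps)
      ultimately have "u = (v / y) * x" "w = (v / y) * z" by simp_all
        thus "\<exists>c. Q = smult3 c P" using True by (intro exI[of _ "v / y"]) (simp add: Q P smult3_def)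
      qed
      show ?thesis using A C by blast
    next
      case y0: False
      hence z0: "z \<noteq> 0" using x0 assms P by auto
      have A: "lf (z, 0, - x) P = 0 \<and> lf (0, z, - y) P = 0" by (simp add: lf_def P algebra_simps)
      have C: "\<forall>Q. lf (z, 0, - x) Q = 0 \<and> lf (0, z, - y) Q = 0 \<longrightarrow> (\<exists>c. Q = smult3 c P)"
      proof (intro allI impI)
        fix Q assume h: "lf (z, 0, - x) Q = 0 \<and> lf (0, z, - y) Q = 0"
        obtain u v w where Q: "Q = (u, v, w)" by (cases Q)
        have "u = (w / z) * x" using lin_solve[of z "-x" w u] h z0 by (simp add: lf_def Q algebra_simps)
      moreover have "v = (w / z) * y" using lin_solve[of z "-y" w v] h z0 by (simp add: lf_def Q algebra_simps)
      ultimately have "u = (w / z) * x" "v = (w / z) * y" by simp_all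
        thus "\<exists>c. Q = smult3 c P" using z0 by (intro exI[of _ "w / z"]) (simp add: Q P smult3_def)
      qed
      show ?thesis using A C by blast
    qed
  qed
qed

lemma lf_smult3: "lf a (smult3 c P) = c * lf a P"
  by (cases a; cases P) (simp add: lf_def smult3_def algebra_simps)

lemma quad_sep:
  fixes P :: "'b::{finite,field} triple"
  assumes "P \<noteq> (0, 0, 0)"
  shows "\<exists>g::'b pm3. homog 2 g \<and> (\<forall>Q. ev id g Q = 0 \<longleftrightarrow> (\<exists>c. Q = smult3 c P))"
proof -
  obtain r1 r0 :: 'b where rr: "\<And>s. s * s + r1 * s + r0 \<noteq> 0" using irred_quad by blast
  obtain a b where ab: "lf a P = 0" "lf b P = 0" "\<And>Q. lf a Q = 0 \<Longrightarrow> lf b Q = 0 \<Longrightarrow> (\<exists>c. Q = smult3 c P)"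
    using lin_pair[OF assms] by blast
  define A where "A = linpm a"
  define B where "B = linpm b"
  define g where "g = A * A + Poly_Mapping.single 0 r1 * A * B + Poly_Mapping.single 0 r0 * B * B"
  have hA: "homog 1 A" "homog 1 B" unfolding A_def B_def by (rule homog_linpm)+
  have hc: "homog 0 (Poly_Mapping.single 0 c :: 'b pm3)" for c by (rule homog_single) (simp add: tdeg_def)
  have "homog (1 + 1) (A * A)" using hA by (intro homog_mult)
  moreover have "homog (0 + 1 + 1) (Poly_Mapping.single 0 r1 * A * B)" using hA hc by (intro homog_mult)
  moreover have "homog (0 + 1 + 1) (Poly_Mapping.single 0 r0 * B * B)" using hA hc by (intro homog_mult)
  ultimately have hg: "homog 2 g" unfolding g_def by (intro homog_add) (simp_all add: numeral_2_eq_2)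
  have evg: "ev id g Q = lf a Q * lf a Q + r1 * (lf a Q * lf b Q) + r0 * (lf b Q * lf b Q)" for Q
    unfolding g_def A_def B_def
    by (simp add: ev_add ev_mult[OF rhom_id] ev_single ev_linpm mono3_zero mult_ac)
  have "ev id g Q = 0 \<longleftrightarrow> (\<exists>c. Q = smult3 c P)" for Q
  proof
    assume h: "ev id g Q = 0"
    show "\<exists>c. Q = smult3 c P"
    proof (cases "lf b Q = 0")
      case True
      hence "lf a Q * lf a Q = 0" using h evg by simp
      hence "lf a Q = 0" by simp
      thus ?thesis using True ab(3) by blast
    next
      case False
      define t where "t = lf a Q / lf b Q"
      have "lf a Q = t * lf b Q" using False unfolding t_def by simp
      hence "ev id g Q = (lf b Q * lf b Q) * (t * t + r1 * t + r0)" using evg by (simp add: algebra_simps)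
      moreover have "t * t + r1 * t + r0 \<noteq> 0" by (rule rr)
      ultimately show ?thesis using h False by simp
    qed
  next
    assume "\<exists>c. Q = smult3 c P"
    then obtain c where "Q = smult3 c P" by blast
    thus "ev id g Q = 0" using evg ab by (simp add: lf_smult3)
  qed
  thus ?thesis using hg by blast
qed

lemma emb3_comp: "emb3 f (emb3 g X) = emb3 (f \<circ> g) X"
  by (cases X) (simp add: emb3_def)

lemma emb3_zero_iff:
  assumes "\<And>x. f x = 0 \<longleftrightarrow> x = 0"
  shows "emb3 f X = (0, 0, 0) \<longleftrightarrow> X = (0, 0, 0)"
  by (cases X) (simp add: emb3_def assms)

lemma sep_pair:
  fixes emb :: "'a::{finite,field} \<Rightarrow> 'b::{finite,field}"
  assumes emb: "rhom emb" and e: "e > 0" "\<forall>x::'b. x ^ (card (UNIV :: 'a set) ^ e) = x"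
    and P: "P \<noteq> (0, 0, 0)" and P': "P' \<noteq> (0, 0, 0)"
    and nsc: "\<not> same_closed_pt (card (UNIV :: 'a set)) P' P"
  shows "\<exists>H :: 'a pm3. homog (2 * e) H \<and> ev emb H P = 0 \<and> ev emb H P' \<noteq> 0"
proof -
  define q where "q = card (UNIV :: 'a set)"
  define \<sigma> where "\<sigma> = (\<lambda>k (x::'b). x ^ (q ^ k))"
  have rs: "rhom (\<sigma> k)" for k unfolding \<sigma>_def q_def by (rule frob_rhom[OF emb])
  have s0: "\<sigma> k x = 0 \<longleftrightarrow> x = 0" for k x unfolding \<sigma>_def q_def by (rule frob_zero_iff[OF emb])
  have sid: "\<sigma> e x = x" for x using e unfolding \<sigma>_def q_def by simp
  have scomp: "\<sigma> a (\<sigma> b x) = \<sigma> (a + b) x" for a b x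
    unfolding \<sigma>_def by (simp flip: power_mult add: power_add mult.commute)
  obtain g where g: "homog 2 g" "\<And>Q. ev id g Q = 0 \<longleftrightarrow> (\<exists>c. Q = smult3 c P)"
    using quad_sep[OF P] by blast
  define F where "F = (\<lambda>k. Poly_Mapping.map (\<sigma> k) g)"
  define N where "N = (\<Prod>k<e. F k)"
  have "homog (2 * card {..<e}) (\<Prod>k<e. F k)"
    by (rule homog_prod) (auto simp: F_def intro: homog_map g(1))
  hence hN: "homog (2 * e) N" unfolding N_def by simp
  have F0: "F 0 = g" unfolding F_def \<sigma>_def by (simp add: map_id_hom)
  have "\<sigma> e = (\<lambda>x. x)" by (rule ext) (rule sid)
  hence Fe: "F e = g" unfolding F_def by (simp add: map_id_hom)
  have FS: "Poly_Mapping.map (\<sigma> 1) (F k) = F (Suc k)" for k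
  proof -
    have "Poly_Mapping.map (\<sigma> 1) (F k) = Poly_Mapping.map (\<sigma> 1 \<circ> \<sigma> k) g"
      unfolding F_def by (rule map_comp_hom) (simp_all add: rhomD[OF rs])
    also have "\<sigma> 1 \<circ> \<sigma> k = \<sigma> (Suc k)" by (rule ext) (simp add: scomp)
    finally show ?thesis unfolding F_def .
  qed
  have inv: "Poly_Mapping.map (\<sigma> 1) N = N"
  proof -
    obtain n where n: "e = Suc n" using e(1) by (cases e) auto
    have "Poly_Mapping.map (\<sigma> 1) N = (\<Prod>k<e. F (Suc k))"
      unfolding N_def by (subst map_prod_hom[OF rs]) (simp only: FS)
    also have "\<dots> = (\<Prod>k<n. F (Suc k)) * F 0" unfolding n using Fe n F0
      by (simp add: prod.lessThan_Suc)
    also have "\<dots> = N" unfolding N_def n prod.lessThan_Suc_shift by (simp add: mult.commute)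
    finally show ?thesis .
  qed
  have fixd: "poly_mapping.lookup N m \<in> range emb" for m
  proof -
    have "\<sigma> 1 (poly_mapping.lookup N m) = poly_mapping.lookup N m"
      using arg_cong[OF inv, of "\<lambda>p. poly_mapping.lookup p m"] by (simp add: lookup_map_hom rhomD[OF rs])
    hence "(poly_mapping.lookup N m) ^ card (UNIV :: 'a set) = poly_mapping.lookup N m"
      unfolding \<sigma>_def q_def by simp
    thus ?thesis using fixed_range[OF emb] by blast
  qed
  have inj: "inj emb" by (rule rhom_inj[OF emb])
  have inv0: "inv emb 0 = 0" using inv_f_f[OF inj, of 0] rhomD(1)[OF emb] by simp
  define H where "H = Poly_Mapping.map (inv emb) N"
  have hH: "homog (2 * e) H" unfolding H_def by (rule homog_map[OF hN])
  have evH: "ev emb H X = (\<Prod>k<e. \<sigma> k (ev id g (emb3 (\<sigma> (e - k)) X)))" for X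
  proof -
    have "ev emb H X = ev (emb \<circ> inv emb) N X" unfolding H_def
      by (rule ev_cmap) (simp_all add: rhomD[OF emb] inv0)
    also have "\<dots> = ev id N X" unfolding ev_def
      by (intro sum.cong refl) (simp add: f_inv_into_f[OF fixd])
    also have "\<dots> = (\<Prod>k<e. ev id (F k) X)" unfolding N_def by (rule ev_prod[OF rhom_id])
    also have "\<dots> = (\<Prod>k<e. \<sigma> k (ev id g (emb3 (\<sigma> (e - k)) X)))"
    proof (intro prod.cong refl)
      fix k assume "k \<in> {..<e}"
      hence ke: "k \<le> e" by simp
      have "ev id (F k) X = ev (\<sigma> k) g X" unfolding F_def
        by (subst ev_cmap) (simp_all add: rhomD[OF rs] comp_def id_def)
      also have "emb3 (\<sigma> k) (emb3 (\<sigma> (e - k)) X) = X"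
        by (cases X) (simp add: emb3_def scomp ke sid)
      hence "ev (\<sigma> k) g X = \<sigma> k (ev id g (emb3 (\<sigma> (e - k)) X))"
        using ev_map[OF rs[of k], of id g "emb3 (\<sigma> (e - k)) X"] by simp
      finally show "ev id (F k) X = \<sigma> k (ev id g (emb3 (\<sigma> (e - k)) X))" .
    qed
    finally show ?thesis .
  qed
  have smult1: "smult3 1 X = X" for X :: "'b triple" by (cases X) (simp add: smult3_def)
  have smult0: "smult3 0 X = (0, 0, 0)" for X :: "'b triple" by (cases X) (simp add: smult3_def)
  have smultm: "smult3 a (smult3 b X) = smult3 (a * b) X" for a b and X :: "'b triple"
    by (cases X) (simp add: smult3_def mult.assoc)
  have "ev emb H P = 0"
  proof -
    have "emb3 (\<sigma> e) P = P" by (cases P) (simp add: emb3_def sid)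
    moreover have "ev id g P = 0" using g(2)[of P] smult1[of P] by metis
    ultimately have z: "\<sigma> 0 (ev id g (emb3 (\<sigma> (e - 0)) P)) = 0" by (simp add: rhomD[OF rs])
    show ?thesis unfolding evH
      by (rule prod_zero) (use z e(1) in blast)+
  qed
  moreover have "ev emb H P' \<noteq> 0"
  proof
    assume "ev emb H P' = 0"
    then obtain k where k: "k \<in> {..<e}" and z: "\<sigma> k (ev id g (emb3 (\<sigma> (e - k)) P')) = 0"
      unfolding evH by (subst (asm) prod_zero_iff) auto
    hence "ev id g (emb3 (\<sigma> (e - k)) P') = 0" using s0 by simp
    then obtain c where c: "emb3 (\<sigma> (e - k)) P' = smult3 c P" using g(2) by blast
    have "emb3 (\<sigma> (e - k)) P' \<noteq> (0, 0, 0)" using P' emb3_zero_iff[of "\<sigma> (e - k)"] s0 by blast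
    hence "c \<noteq> 0" using c smult0 by metis
    have Peq: "P = smult3 (inverse c) (emb3 (\<sigma> (e - k)) P')"
      unfolding c smultm using \<open>c \<noteq> 0\<close> by (simp add: smult1)
    obtain x y z where P'eq: "P' = (x, y, z)" by (cases P')
    have "same_closed_pt (card (UNIV :: 'a set)) P' P"
      unfolding same_closed_pt_def P'eq
      by (intro exI[of _ "e - k"] exI[of _ "inverse c"]) 
         (use Peq \<open>c \<noteq> 0\<close> in \<open>simp add: P'eq emb3_def \<sigma>_def q_def\<close>)
    thus False using nsc by simp
  qed
  ultimately show ?thesis using hH by blast
qed

definition cemb :: "('a \<Rightarrow> 'b::comm_ring_1) \<Rightarrow> 'a \<Rightarrow> 'b poly" where
  "cemb emb = (\<lambda>a. [:emb a:])"

definition lin :: "'b::comm_ring_1 triple \<Rightarrow> 'b triple \<Rightarrow> 'b poly triple" where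
  "lin P w = (case P of (p1, p2, p3) \<Rightarrow> case w of (w1, w2, w3) \<Rightarrow> ([:p1, w1:], [:p2, w2:], [:p3, w3:]))"

definition low :: "'b::comm_ring_1 poly \<Rightarrow> 'b \<times> 'b" where
  "low r = (coeff r 0, coeff r 1)"

definition lmul :: "'b::comm_ring_1 \<times> 'b \<Rightarrow> 'b \<times> 'b \<Rightarrow> 'b \<times> 'b" where
  "lmul a b = (fst a * fst b, fst a * snd b + snd a * fst b)"

definition PMf :: "('a::zero) poly3 \<Rightarrow> 'a pm3" where
  "PMf f = Abs_poly_mapping f"

definition fin3 :: "('a::zero) poly3 \<Rightarrow> bool" where
  "fin3 f \<longleftrightarrow> finite {m. f m \<noteq> 0}"

definition Jf :: "('a::zero \<Rightarrow> 'b::field) \<Rightarrow> 'b triple \<Rightarrow> 'a poly3 \<Rightarrow> 'b triple \<Rightarrow> 'b \<times> 'b" where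
  "Jf emb P f = (\<lambda>w. low (restr emb f P w))"

lemma rhom_cemb: "rhom emb \<Longrightarrow> rhom (cemb emb)"
  unfolding rhom_def cemb_def by (simp add: rhomD)

lemma rhom_poly0: "rhom (\<lambda>r::'b::comm_ring_1 poly. poly r 0)"
  unfolding rhom_def by simp

lemma low_add: "low (r + s) = low r + low s"
  by (simp add: low_def)

lemma low_zero [simp]: "low 0 = (0, 0)"
  by (simp add: low_def)

lemma low_sum: "low (\<Sum>i\<in>I. r i) = (\<Sum>i\<in>I. low (r i))"
  by (induction I rule: infinite_finite_induct) (auto simp: low_add zero_prod_def)

lemma low_mult: "low (r * s) = lmul (low r) (low s)"
proof -
  have "{..Suc 0} = {0, Suc 0}" by auto
  hence "coeff (r * s) 1 = coeff r 0 * coeff s 1 + coeff r 1 * coeff s 0"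
    by (simp add: coeff_mult)
  thus ?thesis by (simp add: low_def lmul_def coeff_mult)
qed

lemma low_const: "low [:c:] = (c, 0)"
  by (simp add: low_def)

lemma low_lin: "low [:a, b:] = (a, b)"
  by (simp add: low_def)

lemma low_one: "low 1 = (1, 0)"
  by (simp add: low_def)

lemma low_power: "low (r ^ n) = (fst (low r) ^ n, of_nat n * fst (low r) ^ (n - 1) * snd (low r))"
proof (induction n)
  case 0 then show ?case by (simp add: low_one)
next
  case (Suc n)
  show ?case
  proof (cases n)
    case 0 then show ?thesis by (simp add: low_def)
  next
    case (Suc n')
    then show ?thesis using Suc.IH by (simp add: low_mult lmul_def algebra_simps)
  qed
qed

lemma lmul_one: "lmul (1, 0) a = a" by (simp add: lmul_def)
lemma lmul_zero: "lmul (0, 0) a = (0, 0)" by (simp add: lmul_def)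

lemma smult_as_mult: "smult c p = [:c:] * p"
  by simp

lemma fin3_Rdeg: "f \<in> Rdeg d \<Longrightarrow> fin3 f"
proof -
  assume "f \<in> Rdeg d"
  hence "{m. f m \<noteq> 0} \<subseteq> {..d} \<times> {..d} \<times> {..d}" unfolding Rdeg_def by fastforce
  thus "fin3 f" unfolding fin3_def by (rule finite_subset) simp
qed

lemma lookup_PMf: "fin3 f \<Longrightarrow> poly_mapping.lookup (PMf f) = f"
  by (simp add: PMf_def fin3_def)

lemma keys_PMf: "fin3 f \<Longrightarrow> Poly_Mapping.keys (PMf f) = supp3 f"
  by (simp add: PMf_def fin3_def supp3_def keys.abs_eq eq_onp_def)

lemma supp3_fin: "fin3 f \<Longrightarrow> finite (supp3 f)"
  by (simp add: fin3_def supp3_def)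

lemma eval3_superset:
  assumes "\<phi> 0 = 0" "finite S" "supp3 f \<subseteq> S"
  shows "eval3 \<phi> f X = (\<Sum>m\<in>S. \<phi> (f m) * mono3 m X)"
proof -
  obtain x y z where X: "X = (x, y, z)" by (cases X)
  have "eval3 \<phi> f X = (\<Sum>m\<in>supp3 f. \<phi> (f m) * mono3 m X)"
    unfolding eval3_def X case_prod_conv by (intro sum.cong refl) (auto simp: mono3_def split: prod.splits)
  also have "\<dots> = (\<Sum>m\<in>S. \<phi> (f m) * mono3 m X)"
    by (rule sum.mono_neutral_left) (use assms in \<open>auto simp: supp3_def\<close>)
  finally show ?thesis .
qed

lemma eval3_ev: "\<phi> 0 = 0 \<Longrightarrow> fin3 f \<Longrightarrow> eval3 \<phi> f X = ev \<phi> (PMf f) X"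
  by (simp add: eval3_superset[of \<phi> "supp3 f"] supp3_fin ev_def keys_PMf lookup_PMf)

lemma restr_ev:
  assumes "\<phi> 0 = 0" "fin3 f"
  shows "restr \<phi> f P w = ev (cemb \<phi>) (PMf f) (lin P w)"
proof -
  obtain p1 p2 p3 where P: "P = (p1, p2, p3)" by (cases P)
  obtain w1 w2 w3 where w: "w = (w1, w2, w3)" by (cases w)
  show ?thesis
    unfolding restr_def ev_def P w lin_def cemb_def case_prod_conv keys_PMf[OF assms(2)] lookup_PMf[OF assms(2)]
    by (intro sum.cong refl) (auto simp: mono3_def split: prod.splits)
qed

lemma low0_ev:
  assumes "rhom \<phi>"
  shows "fst (low (ev (cemb \<phi>) p (lin P w))) = ev \<phi> p P"
proof -
  have "fst (low (ev (cemb \<phi>) p (lin P w))) = poly (ev (cemb \<phi>) p (lin P w)) 0"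
    by (simp add: low_def poly_0_coeff_0)
  also have "\<dots> = ev ((\<lambda>r. poly r 0) \<circ> cemb \<phi>) p (emb3 (\<lambda>r. poly r 0) (lin P w))"
    by (rule ev_map[OF rhom_poly0])
  also have "(\<lambda>r. poly r 0) \<circ> cemb \<phi> = \<phi>" by (rule ext) (simp add: cemb_def)
  also have "emb3 (\<lambda>r. poly r 0) (lin P w) = P" by (cases P; cases w) (simp add: emb3_def lin_def)
  finally show ?thesis .
qed

definition lp :: "'b::comm_ring_1 \<Rightarrow> 'b \<Rightarrow> nat \<Rightarrow> 'b \<times> 'b" where
  "lp p w n = (p ^ n, of_nat n * p ^ (n - 1) * w)"

lemma low_mono3:
  "low (mono3 (i, j, k) (lin (p1, p2, p3) (w1, w2, w3))) = lmul (lmul (lp p1 w1 i) (lp p2 w2 j)) (lp p3 w3 k)"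
  by (simp add: mono3_def lin_def low_mult low_power low_lin lp_def)

lemma low_smult: "low (smult c r) = (c * fst (low r), c * snd (low r))"
  by (simp add: low_def)

lemma low_ev:
  assumes "rhom \<phi>"
  shows "low (ev (cemb \<phi>) p X) = (\<Sum>m\<in>Poly_Mapping.keys p. (\<phi> (poly_mapping.lookup p m) * fst (low (mono3 m X)),
      \<phi> (poly_mapping.lookup p m) * snd (low (mono3 m X))))"
  unfolding ev_def low_sum by (intro sum.cong refl) (simp add: low_smult cemb_def)

lemma dx_eval:
  assumes "\<phi> 0 = 0" "rhom \<phi>" "fin3 f"
  shows "eval3 \<phi> (dx f) (p1, p2, p3) = (\<Sum>m\<in>supp3 f. \<phi> (f m) * (of_nat (fst m) * p1 ^ (fst m - 1) * p2 ^ fst (snd m) * p3 ^ snd (snd m)))"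
proof -
  let ?S1 = "{m\<in>supp3 f. fst m \<ge> 1}"
  let ?sh = "\<lambda>m::nat\<times>nat\<times>nat. (fst m - 1, snd m)"
  have fS: "finite (supp3 f)" using assms(3) by (rule supp3_fin)
  have sub: "supp3 (dx f) \<subseteq> ?sh ` ?S1"
  proof
    fix m assume "m \<in> supp3 (dx f)"
    then obtain i j k where m: "m = (i, j, k)" "dx f (i, j, k) \<noteq> 0" by (cases m) (auto simp: supp3_def)
    have "f (Suc i, j, k) \<noteq> 0"
    proof
      assume "f (Suc i, j, k) = 0"
      hence "dx f (i, j, k) = 0" by (simp add: dx_def)
      thus False using m by simp
    qed
    hence "(Suc i, j, k) \<in> ?S1" by (simp add: supp3_def)
    moreover have "m = ?sh (Suc i, j, k)" using m by simp
    ultimately show "m \<in> ?sh ` ?S1" by blast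
  qed
  have inj: "inj_on ?sh ?S1"
    by (rule inj_onI) (auto simp: prod_eq_iff)
  have "eval3 \<phi> (dx f) (p1, p2, p3) = (\<Sum>m\<in>?sh ` ?S1. \<phi> (dx f m) * mono3 m (p1, p2, p3))"
    by (rule eval3_superset) (use assms fS sub in auto)
  also have "\<dots> = (\<Sum>m\<in>?S1. \<phi> (dx f (?sh m)) * mono3 (?sh m) (p1, p2, p3))"
    by (subst sum.reindex[OF inj]) simp
  also have "\<dots> = (\<Sum>m\<in>?S1. \<phi> (f m) * (of_nat (fst m) * p1 ^ (fst m - 1) * p2 ^ fst (snd m) * p3 ^ snd (snd m)))"
  proof (intro sum.cong refl)
    fix m assume "m \<in> ?S1"
    then obtain i j k where m: "m = (i, j, k)" "i \<ge> 1" by (cases m) auto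
    then obtain i' where i': "i = Suc i'" by (cases i) auto
    show "\<phi> (dx f (?sh m)) * mono3 (?sh m) (p1, p2, p3) = \<phi> (f m) * (of_nat (fst m) * p1 ^ (fst m - 1) * p2 ^ fst (snd m) * p3 ^ snd (snd m))"
      using m i' by (simp add: dx_def mono3_def rhomD[OF assms(2)] rhom_of_nat[OF assms(2)] mult_ac)
  qed
  also have "\<dots> = (\<Sum>m\<in>supp3 f. \<phi> (f m) * (of_nat (fst m) * p1 ^ (fst m - 1) * p2 ^ fst (snd m) * p3 ^ snd (snd m)))"
    by (rule sum.mono_neutral_left) (use fS in \<open>auto simp: not_less_eq_eq\<close>)
  finally show ?thesis .
qed

lemma dy_eval:
  assumes "\<phi> 0 = 0" "rhom \<phi>" "fin3 f"
  shows "eval3 \<phi> (dy f) (p1, p2, p3) = (\<Sum>m\<in>supp3 f. \<phi> (f m) * (p1 ^ fst m * (of_nat (fst (snd m)) * p2 ^ (fst (snd m) - 1)) * p3 ^ snd (snd m)))"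
proof -
  let ?S1 = "{m\<in>supp3 f. fst (snd m) \<ge> 1}"
  let ?sh = "\<lambda>m::nat\<times>nat\<times>nat. (fst m, fst (snd m) - 1, snd (snd m))"
  have fS: "finite (supp3 f)" using assms(3) by (rule supp3_fin)
  have sub: "supp3 (dy f) \<subseteq> ?sh ` ?S1"
  proof
    fix m assume "m \<in> supp3 (dy f)"
    then obtain i j k where m: "m = (i, j, k)" "dy f (i, j, k) \<noteq> 0" by (cases m) (auto simp: supp3_def)
    have "f (i, Suc j, k) \<noteq> 0"
    proof
      assume "f (i, Suc j, k) = 0"
      hence "dy f (i, j, k) = 0" by (simp add: dy_def)
      thus False using m by simp
    qed
    hence "(i, Suc j, k) \<in> ?S1" by (simp add: supp3_def)
    moreover have "m = ?sh (i, Suc j, k)" using m by simp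
    ultimately show "m \<in> ?sh ` ?S1" by blast
  qed
  have inj: "inj_on ?sh ?S1"
    by (rule inj_onI) (auto simp: prod_eq_iff)
  have "eval3 \<phi> (dy f) (p1, p2, p3) = (\<Sum>m\<in>?sh ` ?S1. \<phi> (dy f m) * mono3 m (p1, p2, p3))"
    by (rule eval3_superset) (use assms fS sub in auto)
  also have "\<dots> = (\<Sum>m\<in>?S1. \<phi> (dy f (?sh m)) * mono3 (?sh m) (p1, p2, p3))"
    by (subst sum.reindex[OF inj]) simp
  also have "\<dots> = (\<Sum>m\<in>?S1. \<phi> (f m) * (p1 ^ fst m * (of_nat (fst (snd m)) * p2 ^ (fst (snd m) - 1)) * p3 ^ snd (snd m)))"
  proof (intro sum.cong refl)
    fix m assume "m \<in> ?S1"
    then obtain i j k where m: "m = (i, j, k)" "j \<ge> 1" by (cases m) auto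
    then obtain j' where j': "j = Suc j'" by (cases j) auto
    show "\<phi> (dy f (?sh m)) * mono3 (?sh m) (p1, p2, p3) = \<phi> (f m) * (p1 ^ fst m * (of_nat (fst (snd m)) * p2 ^ (fst (snd m) - 1)) * p3 ^ snd (snd m))"
      using m j' by (simp add: dy_def mono3_def rhomD[OF assms(2)] rhom_of_nat[OF assms(2)] mult_ac)
  qed
  also have "\<dots> = (\<Sum>m\<in>supp3 f. \<phi> (f m) * (p1 ^ fst m * (of_nat (fst (snd m)) * p2 ^ (fst (snd m) - 1)) * p3 ^ snd (snd m)))"
    by (rule sum.mono_neutral_left) (use fS in \<open>auto simp: not_less_eq_eq\<close>)
  finally show ?thesis .
qed

lemma dz_eval:
  assumes "\<phi> 0 = 0" "rhom \<phi>" "fin3 f"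
  shows "eval3 \<phi> (dz f) (p1, p2, p3) = (\<Sum>m\<in>supp3 f. \<phi> (f m) * (p1 ^ fst m * p2 ^ fst (snd m) * (of_nat (snd (snd m)) * p3 ^ (snd (snd m) - 1))))"
proof -
  let ?S1 = "{m\<in>supp3 f. snd (snd m) \<ge> 1}"
  let ?sh = "\<lambda>m::nat\<times>nat\<times>nat. (fst m, fst (snd m), snd (snd m) - 1)"
  have fS: "finite (supp3 f)" using assms(3) by (rule supp3_fin)
  have sub: "supp3 (dz f) \<subseteq> ?sh ` ?S1"
  proof
    fix m assume "m \<in> supp3 (dz f)"
    then obtain i j k where m: "m = (i, j, k)" "dz f (i, j, k) \<noteq> 0" by (cases m) (auto simp: supp3_def)
    have "f (i, j, Suc k) \<noteq> 0"
    proof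
      assume "f (i, j, Suc k) = 0"
      hence "dz f (i, j, k) = 0" by (simp add: dz_def)
      thus False using m by simp
    qed
    hence "(i, j, Suc k) \<in> ?S1" by (simp add: supp3_def)
    moreover have "m = ?sh (i, j, Suc k)" using m by simp
    ultimately show "m \<in> ?sh ` ?S1" by blast
  qed
  have inj: "inj_on ?sh ?S1"
    by (rule inj_onI) (auto simp: prod_eq_iff)
  have "eval3 \<phi> (dz f) (p1, p2, p3) = (\<Sum>m\<in>?sh ` ?S1. \<phi> (dz f m) * mono3 m (p1, p2, p3))"
    by (rule eval3_superset) (use assms fS sub in auto)
  also have "\<dots> = (\<Sum>m\<in>?S1. \<phi> (dz f (?sh m)) * mono3 (?sh m) (p1, p2, p3))"
    by (subst sum.reindex[OF inj]) simp
  also have "\<dots> = (\<Sum>m\<in>?S1. \<phi> (f m) * (p1 ^ fst m * p2 ^ fst (snd m) * (of_nat (snd (snd m)) * p3 ^ (snd (snd m) - 1))))"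
  proof (intro sum.cong refl)
    fix m assume "m \<in> ?S1"
    then obtain i j k where m: "m = (i, j, k)" "k \<ge> 1" by (cases m) auto
    then obtain k' where k': "k = Suc k'" by (cases k) auto
    show "\<phi> (dz f (?sh m)) * mono3 (?sh m) (p1, p2, p3) = \<phi> (f m) * (p1 ^ fst m * p2 ^ fst (snd m) * (of_nat (snd (snd m)) * p3 ^ (snd (snd m) - 1)))"
      using m k' by (simp add: dz_def mono3_def rhomD[OF assms(2)] rhom_of_nat[OF assms(2)] mult_ac)
  qed
  also have "\<dots> = (\<Sum>m\<in>supp3 f. \<phi> (f m) * (p1 ^ fst m * p2 ^ fst (snd m) * (of_nat (snd (snd m)) * p3 ^ (snd (snd m) - 1))))"
    by (rule sum.mono_neutral_left) (use fS in \<open>auto simp: not_less_eq_eq\<close>)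
  finally show ?thesis .
qed

lemma low1_restr:
  assumes "rhom \<phi>" "fin3 f"
  shows "snd (low (restr \<phi> f (p1, p2, p3) (w1, w2, w3))) =
    w1 * eval3 \<phi> (dx f) (p1, p2, p3) + w2 * eval3 \<phi> (dy f) (p1, p2, p3) + w3 * eval3 \<phi> (dz f) (p1, p2, p3)"
proof -
  have z: "\<phi> 0 = 0" using assms(1) by (simp add: rhomD)
  have "snd (low (restr \<phi> f (p1, p2, p3) (w1, w2, w3))) =
     (\<Sum>m\<in>supp3 f. \<phi> (f m) * snd (low (mono3 m (lin (p1, p2, p3) (w1, w2, w3)))))"
    unfolding restr_ev[of \<phi> f, OF z assms(2)] low_ev[OF assms(1)] snd_sum
    by (simp add: keys_PMf lookup_PMf assms(2))
  also have "\<dots> = (\<Sum>m\<in>supp3 f. w1 * (\<phi> (f m) * (of_nat (fst m) * p1 ^ (fst m - 1) * p2 ^ fst (snd m) * p3 ^ snd (snd m)))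
      + w2 * (\<phi> (f m) * (p1 ^ fst m * (of_nat (fst (snd m)) * p2 ^ (fst (snd m) - 1)) * p3 ^ snd (snd m)))
      + w3 * (\<phi> (f m) * (p1 ^ fst m * p2 ^ fst (snd m) * (of_nat (snd (snd m)) * p3 ^ (snd (snd m) - 1)))))"
  proof (intro sum.cong refl)
    fix m :: "nat \<times> nat \<times> nat"
    obtain i j k where m: "m = (i, j, k)" by (cases m)
    show "\<phi> (f m) * snd (low (mono3 m (lin (p1, p2, p3) (w1, w2, w3)))) = w1 * (\<phi> (f m) * (of_nat (fst m) * p1 ^ (fst m - 1) * p2 ^ fst (snd m) * p3 ^ snd (snd m)))
      + w2 * (\<phi> (f m) * (p1 ^ fst m * (of_nat (fst (snd m)) * p2 ^ (fst (snd m) - 1)) * p3 ^ snd (snd m)))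
      + w3 * (\<phi> (f m) * (p1 ^ fst m * p2 ^ fst (snd m) * (of_nat (snd (snd m)) * p3 ^ (snd (snd m) - 1))))"
      unfolding m low_mono3 by (simp add: lmul_def lp_def algebra_simps)
  qed
  also have "\<dots> = w1 * eval3 \<phi> (dx f) (p1, p2, p3) + w2 * eval3 \<phi> (dy f) (p1, p2, p3) + w3 * eval3 \<phi> (dz f) (p1, p2, p3)"
    unfolding dx_eval[OF z assms] dy_eval[OF z assms] dz_eval[OF z assms]
    by (simp add: sum.distrib sum_distrib_left)
  finally show ?thesis .
qed

lemma dvd_t2_iff: "[:0, 1:] ^ 2 dvd (r :: 'b::comm_ring_1 poly) \<longleftrightarrow> low r = (0, 0)"
proof
  assume "[:0, 1:] ^ 2 dvd r"
  then obtain s where s: "r = [:0, 1:] ^ 2 * s" by (elim dvdE)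
  have "[:0, 1:] ^ 2 * s = pCons 0 (pCons 0 s)" by (simp add: power2_eq_square)
  thus "low r = (0, 0)" using s by (simp add: low_def)
next
  assume h: "low r = (0, 0)"
  obtain a t where r: "r = pCons a t" by (cases r)
  obtain b s where t: "t = pCons b s" by (cases t)
  have "a = 0" "b = 0" using h by (simp_all add: low_def r t)
  hence "r = [:0, 1:] ^ 2 * s" by (simp add: r t power2_eq_square)
  thus "[:0, 1:] ^ 2 dvd r" by simp
qed

lemma fin3_dx: "fin3 f \<Longrightarrow> fin3 (dx f)"
proof -
  assume f: "fin3 f"
  have "{m. dx f m \<noteq> 0} \<subseteq> (\<lambda>m. (fst m - 1, snd m)) ` {m. f m \<noteq> 0}"
  proof
    fix m assume "m \<in> {m. dx f m \<noteq> 0}"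
    then obtain i j k where m: "m = (i, j, k)" "dx f (i, j, k) \<noteq> 0" by (cases m) auto
    hence "f (Suc i, j, k) \<noteq> 0" by (auto simp: dx_def)
    thus "m \<in> (\<lambda>m. (fst m - 1, snd m)) ` {m. f m \<noteq> 0}" using m by (auto intro!: image_eqI[of _ _ "(Suc i, j, k)"])
  qed
  thus "fin3 (dx f)" using f unfolding fin3_def by (meson finite_imageI finite_subset)
qed

lemma fin3_dy: "fin3 f \<Longrightarrow> fin3 (dy f)"
proof -
  assume f: "fin3 f"
  have "{m. dy f m \<noteq> 0} \<subseteq> (\<lambda>m. (fst m, fst (snd m) - 1, snd (snd m))) ` {m. f m \<noteq> 0}"
  proof
    fix m assume "m \<in> {m. dy f m \<noteq> 0}"
    then obtain i j k where m: "m = (i, j, k)" "dy f (i, j, k) \<noteq> 0" by (cases m) auto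
    hence "f (i, Suc j, k) \<noteq> 0" by (auto simp: dy_def)
    thus "m \<in> (\<lambda>m. (fst m, fst (snd m) - 1, snd (snd m))) ` {m. f m \<noteq> 0}" using m by (auto intro!: image_eqI[of _ _ "(i, Suc j, k)"])
  qed
  thus "fin3 (dy f)" using f unfolding fin3_def by (meson finite_imageI finite_subset)
qed

lemma fin3_dz: "fin3 f \<Longrightarrow> fin3 (dz f)"
proof -
  assume f: "fin3 f"
  have "{m. dz f m \<noteq> 0} \<subseteq> (\<lambda>m. (fst m, fst (snd m), snd (snd m) - 1)) ` {m. f m \<noteq> 0}"
  proof
    fix m assume "m \<in> {m. dz f m \<noteq> 0}"
    then obtain i j k where m: "m = (i, j, k)" "dz f (i, j, k) \<noteq> 0" by (cases m) auto
    hence "f (i, j, Suc k) \<noteq> 0" by (auto simp: dz_def)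
    thus "m \<in> (\<lambda>m. (fst m, fst (snd m), snd (snd m) - 1)) ` {m. f m \<noteq> 0}" using m by (auto intro!: image_eqI[of _ _ "(i, j, Suc k)"])
  qed
  thus "fin3 (dz f)" using f unfolding fin3_def by (meson finite_imageI finite_subset)
qed

lemma tangent_Jf:
  "Jf emb P f = Jf emb P g \<Longrightarrow> tangent_at emb f L P \<longleftrightarrow> tangent_at emb g L P"
  unfolding tangent_at_def dvd_t2_iff by (metis Jf_def)

lemma fst_Jf: "rhom emb \<Longrightarrow> fin3 f \<Longrightarrow> fst (Jf emb P f w) = eval3 emb f P"
  unfolding Jf_def
  by (simp add: restr_ev[of emb f] rhomD low0_ev eval3_ev)

lemma eval3_emb:
  assumes "rhom emb" "fin3 g"
  shows "emb (eval3 id g Q) = eval3 emb g (emb3 emb Q)"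
proof -
  have "emb (eval3 id g Q) = emb (ev id (PMf g) Q)" using assms(2) by (simp add: eval3_ev)
  also have "\<dots> = ev (emb \<circ> id) (PMf g) (emb3 emb Q)" by (rule ev_map[OF assms(1)])
  also have "\<dots> = eval3 emb g (emb3 emb Q)" using assms by (simp add: eval3_ev rhomD)
  finally show ?thesis .
qed

lemma singular_Jf:
  fixes emb :: "'a::field \<Rightarrow> 'b::field"
  assumes emb: "rhom emb" and f: "fin3 f" and g: "fin3 g"
    and J: "Jf emb (emb3 emb Q) f = Jf emb (emb3 emb Q) g"
  shows "singular_at f Q \<longleftrightarrow> singular_at g Q"
proof -
  have inj: "inj emb" by (rule rhom_inj[OF emb])
  have z: "emb x = 0 \<longleftrightarrow> x = 0" for x using inj_eq[OF inj, of x 0] rhomD(1)[OF emb] by simp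
  obtain p1 p2 p3 where P: "emb3 emb Q = (p1, p2, p3)" by (cases "emb3 emb Q")
  have char: "singular_at h Q \<longleftrightarrow> fst (Jf emb (emb3 emb Q) h (1, 0, 0)) = 0 \<and> snd (Jf emb (emb3 emb Q) h (1, 0, 0)) = 0
      \<and> snd (Jf emb (emb3 emb Q) h (0, 1, 0)) = 0 \<and> snd (Jf emb (emb3 emb Q) h (0, 0, 1)) = 0" if h: "fin3 h" for h
  proof -
    have e0: "eval3 id h Q = 0 \<longleftrightarrow> eval3 emb h (emb3 emb Q) = 0"
      using eval3_emb[OF emb h, of Q] z by metis
    have e1: "eval3 id (dx h) Q = 0 \<longleftrightarrow> eval3 emb (dx h) (emb3 emb Q) = 0"
      using eval3_emb[OF emb fin3_dx[OF h], of Q] z by metis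
    have e2: "eval3 id (dy h) Q = 0 \<longleftrightarrow> eval3 emb (dy h) (emb3 emb Q) = 0"
      using eval3_emb[OF emb fin3_dy[OF h], of Q] z by metis
    have e3: "eval3 id (dz h) Q = 0 \<longleftrightarrow> eval3 emb (dz h) (emb3 emb Q) = 0"
      using eval3_emb[OF emb fin3_dz[OF h], of Q] z by metis
    show ?thesis
      unfolding singular_at_def e0 e1 e2 e3 fst_Jf[OF emb h] P
      unfolding Jf_def low1_restr[OF emb h] by simp
  qed
  show ?thesis using char[OF f] char[OF g] J by simp
qed

lemma Rdeg_Rhomog: "d \<ge> 1 \<Longrightarrow> f \<in> Rdeg d \<Longrightarrow> f \<in> Rhomog"
  unfolding Rhomog_def by auto

lemma cond_sat:
  fixes emb :: "'a::field \<Rightarrow> 'b::field"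
  assumes emb: "rhom emb" and d: "d \<ge> 1" and f: "f \<in> Rdeg d" and g: "g \<in> Rdeg d"
    and J: "Jf emb (cond_pt emb C) f = Jf emb (cond_pt emb C) g"
  shows "f \<in> cond_set emb C \<longleftrightarrow> g \<in> cond_set emb C"
proof -
  have fh: "f \<in> Rhomog" "g \<in> Rhomog" using Rdeg_Rhomog[OF d] f g by auto
  have ff: "fin3 f" "fin3 g" using fin3_Rdeg f g by auto
  show ?thesis
  proof (cases C)
    case (CT L P)
    then show ?thesis using J fh tangent_Jf[of emb P f g L] by (simp add: Tset_def)
  next
    case (CS Q)
    then show ?thesis using J fh singular_Jf[OF emb ff, of Q] by (simp add: Sset_def)
  next
    case (CA0 Q)
    then show ?thesis using J fh tangent_Jf[of emb "emb3 emb Q" f g] by (simp add: A0set_def Tset_def)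
  next
    case (CAL L Q)
    then show ?thesis using J fh tangent_Jf[of emb "emb3 emb Q" f g L] singular_Jf[OF emb ff, of Q]
      by (simp add: ALset_def Tset_def Sset_def)
  qed
qed

lemma dset_sat:
  fixes emb :: "'a::field \<Rightarrow> 'b::field"
  assumes emb: "rhom emb" and d: "d \<ge> 1" and f: "f \<in> Rdeg d" and g: "g \<in> Rdeg d"
    and J: "Jf emb (cond_pt emb (snd D)) f = Jf emb (cond_pt emb (snd D)) g"
  shows "f \<in> dset emb D \<longleftrightarrow> g \<in> dset emb D"
  using cond_sat[OF emb d f g J] Rdeg_Rhomog[OF d] f g unfolding dset_def by auto

lemma unit_coord:
  fixes X :: "'b::comm_ring_1 triple"
  assumes "X \<noteq> (0, 0, 0)"
  shows "\<exists>u. tdeg u = 1 \<and> mono3 u X \<noteq> 0"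
proof -
  obtain x y z where X: "X = (x, y, z)" by (cases X)
  show ?thesis
  proof (cases "x \<noteq> 0")
    case True then show ?thesis by (intro exI[of _ "(1, 0, 0)"]) (simp add: X mono3_def tdeg_def)
  next
    case False
    show ?thesis
    proof (cases "y \<noteq> 0")
      case True then show ?thesis by (intro exI[of _ "(0, 1, 0)"]) (simp add: X mono3_def tdeg_def)
    next
      case False
      hence "z \<noteq> 0" using \<open>\<not> x \<noteq> 0\<close> assms X by auto
      then show ?thesis by (intro exI[of _ "(0, 0, 1)"]) (simp add: X mono3_def tdeg_def)
    qed
  qed
qed

lemma separator:
  fixes emb :: "'a::{finite,field} \<Rightarrow> 'b::{finite,field}" and Ps :: "nat \<Rightarrow> 'b triple"
  assumes emb: "rhom emb" and i: "i < n"
    and nz: "\<And>j. j < n \<Longrightarrow> Ps j \<noteq> (0, 0, 0)"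
    and dist: "\<And>j k. j < n \<Longrightarrow> k < n \<Longrightarrow> j \<noteq> k \<Longrightarrow> \<not> same_closed_pt (card (UNIV :: 'a set)) (Ps j) (Ps k)"
  shows "\<exists>h :: 'a pm3. \<exists>\<delta>\<ge>1. homog \<delta> h \<and> ev emb h (Ps i) \<noteq> 0 \<and> (\<forall>j<n. j \<noteq> i \<longrightarrow> ev emb h (Ps j) = 0)"
proof -
  obtain e where e: "e > 0" "\<forall>x::'b. x ^ (card (UNIV :: 'a set) ^ e) = x"
    using frob_period[OF emb] by blast
  define Oth where "Oth = {j. j < n \<and> j \<noteq> i}"
  have "\<forall>j\<in>Oth. \<exists>H :: 'a pm3. homog (2 * e) H \<and> ev emb H (Ps j) = 0 \<and> ev emb H (Ps i) \<noteq> 0"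
  proof
    fix j assume "j \<in> Oth"
    hence j: "j < n" "j \<noteq> i" unfolding Oth_def by auto
    show "\<exists>H :: 'a pm3. homog (2 * e) H \<and> ev emb H (Ps j) = 0 \<and> ev emb H (Ps i) \<noteq> 0"
      by (rule sep_pair[OF emb e nz[OF j(1)] nz[OF i] dist[OF i j(1)]]) (use j in auto)
  qed
  then obtain Hf where Hf: "\<And>j. j \<in> Oth \<Longrightarrow> homog (2 * e) (Hf j) \<and> ev emb (Hf j) (Ps j) = 0 \<and> ev emb (Hf j) (Ps i) \<noteq> 0"
    by metis
  obtain u where u: "tdeg u = 1" "mono3 u (Ps i) \<noteq> 0" using unit_coord[OF nz[OF i]] by blast
  define h where "h = Poly_Mapping.single u 1 * (\<Prod>j\<in>Oth. Hf j)"
  have fO: "finite Oth" unfolding Oth_def by simp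
  have hh: "homog (1 + 2 * e * card Oth) h" unfolding h_def
    by (intro homog_mult homog_single u(1) homog_prod[OF fO]) (use Hf in blast)
  have evh: "ev emb h X = mono3 u X * (\<Prod>j\<in>Oth. ev emb (Hf j) X)" for X
    unfolding h_def by (simp add: ev_mult[OF emb] ev_prod[OF emb] ev_single rhomD[OF emb])
  have "ev emb h (Ps i) \<noteq> 0" unfolding evh using u(2) Hf fO by (simp add: prod_zero_iff)
  moreover have "ev emb h (Ps j) = 0" if "j < n" "j \<noteq> i" for j
  proof -
    have "j \<in> Oth" using that unfolding Oth_def by simp
    thus ?thesis unfolding evh using Hf fO by (simp add: prod_zero_iff) blast
  qed
  ultimately show ?thesis using hh by (intro exI[of _ h] exI[of _ "1 + 2 * e * card Oth"]) auto
qed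

lemma homog_Rdeg:
  assumes "homog d p" shows "poly_mapping.lookup p \<in> Rdeg d"
  unfolding Rdeg_def
proof (intro CollectI allI impI)
  fix i j k assume "poly_mapping.lookup p (i, j, k) \<noteq> 0"
  hence "(i, j, k) \<in> Poly_Mapping.keys p" by (simp add: in_keys_iff)
  thus "i + j + k = d" using assms unfolding homog_def tdeg_def by force
qed

lemma fin3_lookup: "fin3 (poly_mapping.lookup p)"
  unfolding fin3_def by simp

lemma PMf_lookup: "PMf (poly_mapping.lookup p) = p"
  unfolding PMf_def by (rule lookup_inverse)

lemma Jf_pm: "rhom emb \<Longrightarrow> Jf emb P (poly_mapping.lookup p) = (\<lambda>w. low (ev (cemb emb) p (lin P w)))"
  unfolding Jf_def by (simp add: restr_ev rhomD fin3_lookup PMf_lookup)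

lemma Jf_PMf: "rhom emb \<Longrightarrow> fin3 f \<Longrightarrow> Jf emb P f = (\<lambda>w. low (ev (cemb emb) (PMf f) (lin P w)))"
  unfolding Jf_def by (simp add: restr_ev rhomD)

lemma mono3_simp: "mono3 (a, b, c) (x, y, z) = x ^ a * y ^ b * z ^ c"
  by (simp add: mono3_def)

lemma low_cmul: "low ([:c:] * r) = (c * fst (low r), c * snd (low r))"
  by (simp add: low_smult)

lemma sep_main:
  fixes emb :: "'a::{finite,field} \<Rightarrow> 'b::{finite,field}" and Ps :: "nat \<Rightarrow> 'b triple"
  assumes emb: "rhom emb" and i: "i < n"
    and nz: "\<And>j. j < n \<Longrightarrow> Ps j \<noteq> (0, 0, 0)"
    and dist: "\<And>j k. j < n \<Longrightarrow> k < n \<Longrightarrow> j \<noteq> k \<Longrightarrow> \<not> same_closed_pt (card (UNIV :: 'a set)) (Ps j) (Ps k)"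
  shows "\<exists>d0. \<forall>d\<ge>d0. \<forall>f\<in>Rdeg d. \<exists>g\<in>Rdeg d. Jf emb (Ps i) g = Jf emb (Ps i) f \<and>
            (\<forall>j<n. j \<noteq> i \<longrightarrow> Jf emb (Ps j) g = 0)"
proof -
  obtain h :: "'a pm3" and \<delta> where hd: "\<delta> \<ge> 1" "homog \<delta> h" "ev emb h (Ps i) \<noteq> 0"
    "\<And>j. j < n \<Longrightarrow> j \<noteq> i \<Longrightarrow> ev emb h (Ps j) = 0"
    using separator[where emb=emb and Ps=Ps and i=i and n=n, OF emb i nz dist] by blast
  define M where "M = CHAR('b) * (card (UNIV :: 'b set) - 1)"
  have c2: "card (UNIV :: 'b set) \<ge> 2" by (rule ff_card_ge2)
  have Mpos: "M > 0" unfolding M_def using ff_CHAR_pos[where 'c='b] c2 by simp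
  have oM: "(of_nat M :: 'b) = 0" unfolding M_def by simp
  have powM: "x ^ M = 1" if "(x::'b) \<noteq> 0" for x
  proof -
    have "x ^ (card (UNIV :: 'b set) - 1) = 1" by (rule ff_fermat[OF that])
    thus ?thesis unfolding M_def by (simp add: mult.commute[of "CHAR('b)"] power_mult)
  qed
  define B where "B = \<delta> * M"
  have Bpos: "B > 0" unfolding B_def using hd(1) Mpos by simp
  have oB: "(of_nat B :: 'b) = 0" unfolding B_def using oM by simp
  have powB: "x ^ B = 1" if "(x::'b) \<noteq> 0" for x
    unfolding B_def power_mult by (rule powM) (use that in simp)
  have hM: "homog B (h ^ M)" unfolding B_def by (rule homog_power[OF hd(2)])
  define vB where "vB = (\<lambda>m::nat\<times>nat\<times>nat. if B \<le> fst m then (B, 0, 0) else if B \<le> fst (snd m) then (0, B, 0) else (0, 0::nat, B))"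
  have vB_split: "vB m + (m - vB m) = m \<and> tdeg (m - vB m) = tdeg m - B" if "tdeg m \<ge> 3 * B" for m
  proof -
    obtain a b c where m: "m = (a, b, c)" by (cases m)
    show ?thesis using that unfolding vB_def m by (auto simp: tdeg_def)
  qed
  have low_vB: "low (mono3 (vB m) (lin P w)) = (mono3 (vB m) P, 0)" for m and P w :: "'b triple"
  proof -
    obtain p1 p2 p3 where P: "P = (p1, p2, p3)" by (cases P)
    obtain w1 w2 w3 where w: "w = (w1, w2, w3)" by (cases w)
    show ?thesis unfolding vB_def P w
      by (auto simp: low_mono3 lp_def lmul_def oB mono3_simp)
  qed
  have val_vB: "mono3 (vB m) P = 1" if "mono3 (vB m) P \<noteq> 0" for m and P :: "'b triple"
  proof -
    obtain p1 p2 p3 where P: "P = (p1, p2, p3)" by (cases P)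
    show ?thesis using that unfolding vB_def P by (auto simp: mono3_def powB)
  qed
  have "\<forall>d\<ge>3 * B. \<forall>f\<in>Rdeg d. \<exists>g\<in>Rdeg d. Jf emb (Ps i) g = Jf emb (Ps i) f \<and>
            (\<forall>j<n. j \<noteq> i \<longrightarrow> Jf emb (Ps j) g = 0)"
  proof (intro allI impI ballI)
    fix d and f :: "'a poly3" assume d: "d \<ge> 3 * B" and f: "f \<in> Rdeg d"
    have ff: "fin3 f" using f by (rule fin3_Rdeg)
    have tdm: "tdeg m = d" if "m \<in> supp3 f" for m
      using f that unfolding Rdeg_def supp3_def tdeg_def by (cases m) auto
    define cond where "cond = (\<lambda>m. mono3 (vB m) (Ps i) \<noteq> 0)"
    define G where "G = (\<lambda>m. if cond m then h ^ M * Poly_Mapping.single (m - vB m) (1::'a) else 0)"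
    define gp where "gp = (\<Sum>m\<in>supp3 f. Poly_Mapping.single 0 (f m) * G m)"
    have hG: "homog d (G m)" if "m \<in> supp3 f" for m
    proof -
      have t: "tdeg m = d" using tdm[OF that] .
      have "homog (B + (d - B)) (h ^ M * Poly_Mapping.single (m - vB m) (1::'a))"
        by (intro homog_mult hM homog_single) (use vB_split[of m] t d in auto)
      moreover have "B + (d - B) = d" using d Bpos by simp
      ultimately show ?thesis unfolding G_def by (auto simp: homog_zero)
    qed
    have hgp: "homog d gp" unfolding gp_def
    proof (intro homog_sum)
      fix m assume "m \<in> supp3 f"
      have "homog (0 + d) (Poly_Mapping.single 0 (f m) * G m)"
        by (intro homog_mult homog_single hG \<open>m \<in> supp3 f\<close>) (simp add: tdeg_def)
      thus "homog d (Poly_Mapping.single 0 (f m) * G m)" by simp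
    qed
    define g where "g = poly_mapping.lookup gp"
    have gR: "g \<in> Rdeg d" unfolding g_def by (rule homog_Rdeg[OF hgp])
    have rc: "rhom (cemb emb)" by (rule rhom_cemb[OF emb])
    have Eg: "ev (cemb emb) gp X = (\<Sum>m\<in>supp3 f. [:emb (f m):] * ev (cemb emb) (G m) X)" for X
    proof -
      have "ev (cemb emb) gp X = (\<Sum>m\<in>supp3 f. ev (cemb emb) (Poly_Mapping.single 0 (f m) * G m) X)"
        unfolding gp_def by (rule ev_sum) (simp_all add: rhomD[OF rc])
      also have "\<dots> = (\<Sum>m\<in>supp3 f. [:emb (f m):] * ev (cemb emb) (G m) X)"
        by (intro sum.cong refl, subst ev_mult[OF rc]) (simp add: ev_single rhomD[OF rc] rhomD[OF emb] mono3_zero cemb_def)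
      finally show ?thesis .
    qed
    have Ef: "ev (cemb emb) (PMf f) X = (\<Sum>m\<in>supp3 f. [:emb (f m):] * mono3 m X)" for X
      unfolding ev_def by (simp add: keys_PMf[OF ff] lookup_PMf[OF ff] cemb_def)
    have EG: "ev (cemb emb) (G m) X = (if cond m then ev (cemb emb) h X ^ M * mono3 (m - vB m) X else 0)" for m X
      unfolding G_def by (simp add: ev_mult[OF rc] ev_power[OF rc] ev_single rhomD[OF rc])
    have lowhM: "low (ev (cemb emb) h (lin P w) ^ M) = (ev emb h P ^ M, 0)" for P w
      by (simp add: low_power oM low0_ev[OF emb])
    have Jg: "Jf emb P g = (\<lambda>w. \<Sum>m\<in>supp3 f. (emb (f m) * fst (low (ev (cemb emb) (G m) (lin P w))),
        emb (f m) * snd (low (ev (cemb emb) (G m) (lin P w)))))" for P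
      unfolding g_def Jf_pm[OF emb] Eg low_sum low_cmul ..
    have Jff: "Jf emb P f = (\<lambda>w. \<Sum>m\<in>supp3 f. (emb (f m) * fst (low (mono3 m (lin P w))),
        emb (f m) * snd (low (mono3 m (lin P w)))))" for P
      unfolding Jf_PMf[OF emb ff] Ef low_sum low_cmul ..
    have splitm: "mono3 m X = mono3 (vB m) X * mono3 (m - vB m) X" if "m \<in> supp3 f" for m and X :: "'b poly triple"
      using vB_split[of m] tdm[OF that] d by (simp flip: mono3_add)
    have "Jf emb (Ps i) g = Jf emb (Ps i) f"
      unfolding Jg Jff
    proof (intro ext sum.cong refl)
      fix w m assume m: "m \<in> supp3 f"
      have "low (ev (cemb emb) (G m) (lin (Ps i) w)) = low (mono3 m (lin (Ps i) w))"
      proof (cases "cond m")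
        case True
        have "ev emb h (Ps i) ^ M = 1" by (rule powM[OF hd(3)])
        hence "low (ev (cemb emb) (G m) (lin (Ps i) w)) = lmul (1, 0) (low (mono3 (m - vB m) (lin (Ps i) w)))"
          using True by (simp add: EG low_mult lowhM)
        also have "\<dots> = low (mono3 m (lin (Ps i) w))"
          using True val_vB[of m "Ps i"] unfolding cond_def
          by (simp add: splitm[OF m] low_mult low_vB)
        finally show ?thesis .
      next
        case False
        hence "low (mono3 m (lin (Ps i) w)) = (0, 0)"
          unfolding cond_def by (simp add: splitm[OF m] low_mult low_vB lmul_def)
        then show ?thesis using False by (simp add: EG)
      qed
      thus "(emb (f m) * fst (low (ev (cemb emb) (G m) (lin (Ps i) w))), emb (f m) * snd (low (ev (cemb emb) (G m) (lin (Ps i) w)))) =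
            (emb (f m) * fst (low (mono3 m (lin (Ps i) w))), emb (f m) * snd (low (mono3 m (lin (Ps i) w))))" by simp
    qed
    moreover have "Jf emb (Ps j) g = 0" if j: "j < n" "j \<noteq> i" for j
    proof -
      have hz: "ev emb h (Ps j) = 0" by (rule hd(4)[OF j])
      have "low (ev (cemb emb) (G m) (lin (Ps j) w)) = (0, 0)" for m w
        using Mpos by (simp add: EG low_mult lowhM hz lmul_def)
      thus ?thesis unfolding Jg by (simp add: fun_eq_iff flip: zero_prod_def)
    qed
    ultimately show "\<exists>g\<in>Rdeg d. Jf emb (Ps i) g = Jf emb (Ps i) f \<and> (\<forall>j<n. j \<noteq> i \<longrightarrow> Jf emb (Ps j) g = 0)"
      using gR by blast
  qed
  thus ?thesis by blast
qed

lemma finite_Rdeg: "finite (Rdeg d :: ('a::{finite,zero}) poly3 set)"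
proof -
  define S where "S = {..d} \<times> {..d} \<times> {..d}"
  have fS: "finite S" unfolding S_def by simp
  have "Rdeg d \<subseteq> (\<lambda>g m. if m \<in> S then g m else 0) ` (PiE S (\<lambda>_. (UNIV :: 'a set)))"
  proof
    fix f :: "'a poly3" assume f: "f \<in> Rdeg d"
    have "f = (\<lambda>m. if m \<in> S then restrict f S m else 0)"
    proof (rule ext)
      fix m show "f m = (if m \<in> S then restrict f S m else 0)"
      proof (cases "m \<in> S")
        case False
        obtain i j k where m: "m = (i, j, k)" by (cases m)
        have "f m = 0" using False f unfolding S_def Rdeg_def m by fastforce
        thus ?thesis using False by simp
      qed simp
    qed
    moreover have "restrict f S \<in> PiE S (\<lambda>_. UNIV)" by simp
    ultimately show "f \<in> (\<lambda>g m. if m \<in> S then g m else 0) ` (PiE S (\<lambda>_. (UNIV :: 'a set)))"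
      by (rule image_eqI)
  qed
  moreover have "finite (PiE S (\<lambda>_. (UNIV :: 'a set)))" using fS by (intro finite_PiE) auto
  ultimately show ?thesis by (meson finite_imageI finite_subset)
qed

lemma Rdeg_subgrp: "subgrp (Rdeg d :: ('a::ab_group_add) poly3 set)"
  unfolding subgrp_def Rdeg_def by (auto simp: plus_fun_def fun_diff_def zero_fun_def) (metis add.right_neutral, metis)

lemma PMf_add: "fin3 f \<Longrightarrow> fin3 g \<Longrightarrow> fin3 (f + g) \<Longrightarrow> PMf (f + g) = PMf f + PMf g"
  by (rule poly_mapping_eqI) (simp add: lookup_PMf lookup_add)

lemma Jf_addhom:
  fixes emb :: "'a::field \<Rightarrow> 'b::field"
  assumes emb: "rhom emb"
  shows "addhom (Rdeg d) (Jf emb P)"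
  unfolding addhom_def
proof (intro ballI)
  fix f g :: "'a poly3" assume f: "f \<in> Rdeg d" and g: "g \<in> Rdeg d"
  have fg: "f + g \<in> Rdeg d" using Rdeg_subgrp[where d=d] f g unfolding subgrp_def by blast
  have ff: "fin3 f" "fin3 g" "fin3 (f + g)" using fin3_Rdeg f g fg by auto
  have rc: "rhom (cemb emb)" by (rule rhom_cemb[OF emb])
  show "Jf emb P (f + g) = Jf emb P f + Jf emb P g"
    unfolding Jf_PMf[OF emb ff(1)] Jf_PMf[OF emb ff(2)] Jf_PMf[OF emb ff(3)] PMf_add[OF ff]
    by (rule ext) (simp add: ev_add rhomD[OF rc] low_add)
qed

lemma mu_muV: "mu d X = muV (Rdeg d) X"
  by (simp add: mu_def muV_def)

theorem lemma4p7:
  fixes emb :: "'a::{finite, field} \<Rightarrow> 'b::{finite, field}"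
    and Ds :: "(bool \<times> ('a, 'b) cond) list"
  assumes "field_emb emb"
    and "\<forall>D\<in>set Ds. cond_valid emb (snd D)"
    and "\<forall>i<length Ds. \<forall>j<length Ds. i \<noteq> j \<longrightarrow>
           \<not> same_closed_pt (card (UNIV :: 'a set)) (cond_pt emb (snd (Ds ! i))) (cond_pt emb (snd (Ds ! j)))"
  shows "\<exists>d0. \<forall>d\<ge>d0.
           mu d (Rhomog \<inter> (\<Inter>D\<in>set Ds. dset emb D)) = (\<Prod>D\<leftarrow>Ds. mu d (dset emb D))"
proof -
  have emb: "rhom emb" using assms(1) by (rule field_emb_rhom)
  have inj: "inj emb" by (rule rhom_inj[OF emb])
  define n where "n = length Ds"
  define Ps where "Ps = (\<lambda>j. cond_pt emb (snd (Ds ! j)))"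
  have nz: "Ps j \<noteq> (0, 0, 0)" if "j < n" for j
  proof -
    have v: "cond_valid emb (snd (Ds ! j))" using assms(2) that unfolding n_def by auto
    have z: "emb x = 0 \<longleftrightarrow> x = 0" for x using inj_eq[OF inj, of x 0] rhomD(1)[OF emb] by simp
    have e3: "emb3 emb Q \<noteq> (0, 0, 0)" if "Q \<noteq> (0, 0, 0)" for Q
      using emb3_zero_iff[of emb Q, OF z] that by simp
    show ?thesis using v e3 unfolding Ps_def by (cases "snd (Ds ! j)") auto
  qed
  have dist: "\<not> same_closed_pt (card (UNIV :: 'a set)) (Ps j) (Ps k)" if "j < n" "k < n" "j \<noteq> k" for j k
    using assms(3) that unfolding Ps_def n_def by blast
  have "\<forall>i. \<exists>d0. i < n \<longrightarrow> (\<forall>d\<ge>d0. \<forall>f\<in>Rdeg d. \<exists>g\<in>Rdeg d. Jf emb (Ps i) g = Jf emb (Ps i) f \<and>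
            (\<forall>j<n. j \<noteq> i \<longrightarrow> Jf emb (Ps j) g = 0))"
  proof
    fix i
    show "\<exists>d0. i < n \<longrightarrow> (\<forall>d\<ge>d0. \<forall>f\<in>Rdeg d. \<exists>g\<in>Rdeg d. Jf emb (Ps i) g = Jf emb (Ps i) f \<and>
            (\<forall>j<n. j \<noteq> i \<longrightarrow> Jf emb (Ps j) g = 0))"
    proof (cases "i < n")
      case True
      show ?thesis using sep_main[where emb=emb and Ps=Ps and n=n and i=i, OF emb True nz dist] True by blast
    qed simp
  qed
  from choice[OF this] obtain D0 where D0': "\<forall>i. i < n \<longrightarrow> (\<forall>d\<ge>D0 i. \<forall>f\<in>Rdeg d. \<exists>g\<in>Rdeg d. Jf emb (Ps i) g = Jf emb (Ps i) f \<and>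
            (\<forall>j<n. j \<noteq> i \<longrightarrow> Jf emb (Ps j) g = 0))" by blast
  have D0: "\<forall>d\<ge>D0 i. \<forall>f\<in>Rdeg d. \<exists>g\<in>Rdeg d. Jf emb (Ps i) g = Jf emb (Ps i) f \<and>
            (\<forall>j<n. j \<noteq> i \<longrightarrow> Jf emb (Ps j) g = 0)" if "i < n" for i
    using D0' that by blast
  define d0 where "d0 = 1 + (\<Sum>i<n. D0 i)"
  have "mu d (Rhomog \<inter> (\<Inter>D\<in>set Ds. dset emb D)) = (\<Prod>D\<leftarrow>Ds. mu d (dset emb D))" if d: "d \<ge> d0" for d
  proof -
    have d1: "d \<ge> 1" using d unfolding d0_def by simp
    have dD: "d \<ge> D0 i" if "i < n" for i
    proof -
      have "D0 i \<le> (\<Sum>i<n. D0 i)" using that by (intro member_le_sum) auto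
      thus ?thesis using d unfolding d0_def by simp
    qed
    define A where "A = (\<lambda>i. dset emb (Ds ! i))"
    have ind: "muV (Rdeg d) (\<Inter>i<n. A i) = (\<Prod>i<n. muV (Rdeg d) (A i))"
    proof (rule indep_n[where J = "\<lambda>i. Jf emb (Ps i)" and N = n])
      show "subgrp (Rdeg d :: 'a poly3 set)" by (rule Rdeg_subgrp)
      show "finite (Rdeg d :: 'a poly3 set)" by (rule finite_Rdeg)
      show "addhom (Rdeg d) (Jf emb (Ps i))" for i by (rule Jf_addhom[OF emb])
      show "sat (Rdeg d) (A i) (Jf emb (Ps i))" if "i < n" for i
        unfolding sat_def A_def Ps_def using dset_sat[OF emb d1] by blast
      show "\<exists>g\<in>Rdeg d. Jf emb (Ps i) g = Jf emb (Ps i) f \<and> (\<forall>j<n. j \<noteq> i \<longrightarrow> Jf emb (Ps j) g = 0)"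
        if "i < n" "f \<in> Rdeg d" for i f
        using D0[OF that(1)] dD[OF that(1)] that(2) by blast
    qed simp
    have sub: "Rdeg d \<subseteq> Rhomog" using Rdeg_Rhomog[OF d1] by blast
    have sD: "set Ds = (\<lambda>i. Ds ! i) ` {..<length Ds}"
      by (metis atLeast0LessThan list.set_map map_nth set_upt)
    have "(\<Inter>D\<in>set Ds. dset emb D) = (\<Inter>i<n. A i)"
      unfolding A_def n_def sD image_image by simp
    hence "mu d (Rhomog \<inter> (\<Inter>D\<in>set Ds. dset emb D)) = muV (Rdeg d) (\<Inter>i<n. A i)"
    proof -
      have "(Rhomog \<inter> (\<Inter>D\<in>set Ds. dset emb D)) \<inter> Rdeg d = (\<Inter>i<n. A i) \<inter> Rdeg d"
        using sub \<open>(\<Inter>D\<in>set Ds. dset emb D) = (\<Inter>i<n. A i)\<close> by blast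
      thus ?thesis unfolding mu_muV muV_def by simp
    qed
    also have "\<dots> = (\<Prod>i<n. muV (Rdeg d) (A i))" by (rule ind)
    also have "\<dots> = (\<Prod>D\<leftarrow>Ds. mu d (dset emb D))"
      unfolding prod.list_conv_set_nth A_def n_def mu_muV
      by (simp add: atLeast0LessThan)
    finally show ?thesis .
  qed
  thus ?thesis by blast
qed

end
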